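(* Let $n_1,\dots,n_r$ be positive integers, pairwise distinct ($n_j\ne n_l$ for $j\ne l$), and let $\mathcal R$ be a real Lie algebra of block diagonal matrices $\mathrm{diag}(A_1,\dots,A_r)$ with $A_j\in su(n_j)$ for each $j$. Assume weak subspace controllability: for every $j\in\{1,\dots,r\}$ and every $Z\in su(n_j)$ there is an element $\mathrm{diag}(A_1,\dots,A_r)\in\mathcal R$ with $A_j=Z$. Then $\mathcal R=\bigoplus_{j=1}^r su(n_j)$ (all block diagonal matrices with arbitrary blocks $A_j\in su(n_j)$). *)

theory Defs
  imports "Jordan_Normal_Form.Schur_Decomposition"
begin

definition mtrace :: "complex mat \<Rightarrow> complex" where
  "mtrace A = (\<Sum>i<dim_row A. A $$ (i, i))"

definition su :: "nat \<Rightarrow> complex mat set" where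
  "su n = {A \<in> carrier_mat n n. mat_adjoint A = - A \<and> mtrace A = 0}"

text \<open>Block diagonal matrices diag(A_0,...,A_{r-1}) are represented by their family of
  blocks j \<mapsto> A_j (j < r); unused indices j \<ge> r carry the 0 x 0 matrix.\<close>
definition block_su :: "(nat \<Rightarrow> nat) \<Rightarrow> nat \<Rightarrow> (nat \<Rightarrow> complex mat) set" where
  "block_su n r = {A. (\<forall>j<r. A j \<in> su (n j)) \<and> (\<forall>j\<ge>r. A j = 0\<^sub>m 0 0)}"

definition bd_add :: "(nat \<Rightarrow> complex mat) \<Rightarrow> (nat \<Rightarrow> complex mat) \<Rightarrow> (nat \<Rightarrow> complex mat)" where
  "bd_add A B = (\<lambda>j. A j + B j)"

definition bd_scale :: "real \<Rightarrow> (nat \<Rightarrow> complex mat) \<Rightarrow> (nat \<Rightarrow> complex mat)" where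
  "bd_scale c A = (\<lambda>j. complex_of_real c \<cdot>\<^sub>m A j)"

definition bd_bracket :: "(nat \<Rightarrow> complex mat) \<Rightarrow> (nat \<Rightarrow> complex mat) \<Rightarrow> (nat \<Rightarrow> complex mat)" where
  "bd_bracket A B = (\<lambda>j. A j * B j - B j * A j)"

definition real_lie_subalgebra :: "(nat \<Rightarrow> complex mat) set \<Rightarrow> bool" where
  "real_lie_subalgebra L \<longleftrightarrow>
     L \<noteq> {} \<and>
     (\<forall>A\<in>L. \<forall>B\<in>L. bd_add A B \<in> L) \<and>
     (\<forall>c. \<forall>A\<in>L. bd_scale c A \<in> L) \<and>
     (\<forall>A\<in>L. \<forall>B\<in>L. bd_bracket A B \<in> L)"

end

theory Submission
  imports Defs "HOL-Library.Function_Algebras"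
begin

lemma adj_entry:
  fixes A :: "complex mat"
  assumes "A \<in> carrier_mat n n" "i<n" "j<n"
  shows "mat_adjoint A $$ (i,j) = cnj (A $$ (j,i))"
  using assms unfolding mat_adjoint_def by (simp add: mat_of_rows_def conjugate_complex_def)

lemma adj_dim: "A \<in> carrier_mat n n \<Longrightarrow> mat_adjoint A \<in> carrier_mat n n"
  unfolding mat_adjoint_def by (simp add: mat_of_rows_def)

lemma su_iff:
  "A \<in> su n \<longleftrightarrow> A \<in> carrier_mat n n \<and> (\<forall>i<n. \<forall>j<n. A $$ (i,j) = - cnj (A $$ (j,i))) \<and> (\<Sum>i<n. A $$ (i,i)) = 0"
proof
  assume A: "A \<in> su n"
  hence c: "A \<in> carrier_mat n n" and e: "mat_adjoint A = - A" and t: "mtrace A = 0" by (auto simp: su_def)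
  have "\<forall>i<n. \<forall>j<n. A $$ (i,j) = - cnj (A $$ (j,i))"
  proof (intro allI impI)
    fix i j assume "i<n" "j<n"
    have "mat_adjoint A $$ (j,i) = (- A) $$ (j,i)" using e by simp
    hence "cnj (A $$ (i,j)) = - A $$ (j,i)" using c \<open>i<n\<close> \<open>j<n\<close> by (simp add: adj_entry)
    hence "cnj (cnj (A $$ (i,j))) = cnj (- A $$ (j,i))" by (rule arg_cong)
    thus "A $$ (i,j) = - cnj (A $$ (j,i))" by simp
  qed
  moreover have "(\<Sum>i<n. A $$ (i,i)) = 0" using t c by (simp add: mtrace_def)
  ultimately show "A \<in> carrier_mat n n \<and> (\<forall>i<n. \<forall>j<n. A $$ (i,j) = - cnj (A $$ (j,i))) \<and> (\<Sum>i<n. A $$ (i,i)) = 0"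
    using c by blast
next
  assume H: "A \<in> carrier_mat n n \<and> (\<forall>i<n. \<forall>j<n. A $$ (i,j) = - cnj (A $$ (j,i))) \<and> (\<Sum>i<n. A $$ (i,i)) = 0"
  hence c: "A \<in> carrier_mat n n" by blast
  have "mat_adjoint A = - A"
  proof (rule eq_matI)
    fix i j assume "i < dim_row (- A)" "j < dim_col (- A)"
    hence "i<n" "j<n" using c by auto
    moreover have "A $$ (j,i) = - cnj (A $$ (i,j))" using H \<open>i<n\<close> \<open>j<n\<close> by blast
    ultimately show "mat_adjoint A $$ (i, j) = (- A) $$ (i, j)" using c
      by (simp add: adj_entry)
  qed (use c adj_dim[OF c] in auto)
  moreover have "(\<Sum>i<n. A $$ (i,i)) = 0" using H by blast
  hence "mtrace A = 0" using c unfolding mtrace_def by simp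
  ultimately show "A \<in> su n" using c unfolding su_def by blast
qed

lemma mult_entry:
  fixes A B :: "complex mat"
  assumes "A \<in> carrier_mat n n" "B \<in> carrier_mat n n" "i<n" "j<n"
  shows "(A * B) $$ (i,j) = (\<Sum>k<n. A $$ (i,k) * B $$ (k,j))"
  using assms by (simp add: scalar_prod_def lessThan_atLeast0)

lemma sum_single:
  fixes n :: nat
  assumes "c < n" "\<And>k. k < n \<Longrightarrow> k \<noteq> c \<Longrightarrow> f k = 0"
  shows "(\<Sum>k<n. f k) = (f c :: complex)"
proof -
  have "(\<Sum>k<n. f k) = f c + (\<Sum>k\<in>{..<n}-{c}. f k)"
    using assms(1) by (subst sum.remove[where x=c]) auto
  also have "(\<Sum>k\<in>{..<n}-{c}. f k) = 0" using assms(2) by (intro sum.neutral) auto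
  finally show ?thesis by simp
qed

definition Dg :: "nat \<Rightarrow> (nat \<Rightarrow> complex) \<Rightarrow> complex mat" where
  "Dg n d = mat n n (\<lambda>(i,j). if i = j then d i else 0)"

definition Pm :: "nat \<Rightarrow> nat \<Rightarrow> nat \<Rightarrow> complex \<Rightarrow> complex mat" where
  "Pm n p q a = mat n n (\<lambda>(i,j). if i = p \<and> j = q then a else if i = q \<and> j = p then - cnj a else 0)"

lemma Dg_carrier[simp]: "Dg n d \<in> carrier_mat n n" by (simp add: Dg_def)
lemma Pm_carrier[simp]: "Pm n p q a \<in> carrier_mat n n" by (simp add: Pm_def)
lemma Dg_dim[simp]: "dim_row (Dg n d) = n" "dim_col (Dg n d) = n" by (auto simp: Dg_def)
lemma Pm_dim[simp]: "dim_row (Pm n p q a) = n" "dim_col (Pm n p q a) = n" by (auto simp: Pm_def)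
lemma Dg_entry: "i < n \<Longrightarrow> j < n \<Longrightarrow> Dg n d $$ (i,j) = (if i = j then d i else 0)"
  by (simp add: Dg_def)
lemma Pm_entry: "i < n \<Longrightarrow> j < n \<Longrightarrow> Pm n p q a $$ (i,j) = (if i = p \<and> j = q then a else if i = q \<and> j = p then - cnj a else 0)"
  by (simp add: Pm_def)

lemma diag_bracket_entry:
  fixes D X :: "complex mat"
  assumes D: "D \<in> carrier_mat n n" and dg: "\<And>i j. i<n \<Longrightarrow> j<n \<Longrightarrow> i \<noteq> j \<Longrightarrow> D $$ (i,j) = 0"
    and X: "X \<in> carrier_mat n n" and ij: "i<n" "j<n"
  shows "(D * X - X * D) $$ (i,j) = (D $$ (i,i) - D $$ (j,j)) * X $$ (i,j)"
proof -
  have 1: "(D * X) $$ (i,j) = D $$ (i,i) * X $$ (i,j)"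
    unfolding mult_entry[OF D X ij] by (rule sum_single) (auto simp: dg ij)
  have 2: "(X * D) $$ (i,j) = X $$ (i,j) * D $$ (j,j)"
    unfolding mult_entry[OF X D ij] by (rule sum_single) (auto simp: dg ij)
  show ?thesis using D X ij 1 2 by (simp add: algebra_simps)
qed

lemma Pm_left:
  assumes "p \<noteq> q" "p < n" "q < n" "i < n"
  shows "(\<Sum>k<n. Pm n p q a $$ (i,k) * g k) = (if i = p then a * g q else if i = q then - cnj a * g p else 0)"
proof -
  consider "i = p" | "i = q" | "i \<noteq> p" "i \<noteq> q" by blast
  thus ?thesis
  proof cases
    case 1
    have "(\<Sum>k<n. Pm n p q a $$ (i,k) * g k) = Pm n p q a $$ (i,q) * g q"
      by (rule sum_single) (use assms 1 in \<open>auto simp: Pm_entry\<close>)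
    thus ?thesis using assms 1 by (simp add: Pm_entry)
  next
    case 2
    have "(\<Sum>k<n. Pm n p q a $$ (i,k) * g k) = Pm n p q a $$ (i,p) * g p"
      by (rule sum_single) (use assms 2 in \<open>auto simp: Pm_entry\<close>)
    thus ?thesis using assms 2 by (simp add: Pm_entry)
  next
    case 3
    have "(\<Sum>k<n. Pm n p q a $$ (i,k) * g k) = 0"
      using assms 3 by (intro sum.neutral) (simp add: Pm_entry)
    thus ?thesis using 3 by simp
  qed
qed

lemma Pm_right:
  assumes "p \<noteq> q" "p < n" "q < n" "j < n"
  shows "(\<Sum>k<n. g k * Pm n p q a $$ (k,j)) = (if j = q then g p * a else if j = p then - g q * cnj a else 0)"
proof -
  consider "j = q" | "j = p" | "j \<noteq> p" "j \<noteq> q" by blast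
  thus ?thesis
  proof cases
    case 1
    have "(\<Sum>k<n. g k * Pm n p q a $$ (k,j)) = g p * Pm n p q a $$ (p,j)"
      by (rule sum_single) (use assms 1 in \<open>auto simp: Pm_entry\<close>)
    thus ?thesis using assms 1 by (simp add: Pm_entry)
  next
    case 2
    have "(\<Sum>k<n. g k * Pm n p q a $$ (k,j)) = g q * Pm n p q a $$ (q,j)"
      by (rule sum_single) (use assms 2 in \<open>auto simp: Pm_entry\<close>)
    thus ?thesis using assms 2 by (simp add: Pm_entry)
  next
    case 3
    have "(\<Sum>k<n. g k * Pm n p q a $$ (k,j)) = 0"
      using assms 3 by (intro sum.neutral) (simp add: Pm_entry)
    thus ?thesis using 3 by simp
  qed
qed

lemma Pm_mult_left:
  assumes "p \<noteq> q" "p < n" "q < n" "i < n" "j < n" "B \<in> carrier_mat n n"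
  shows "(Pm n p q a * B) $$ (i,j) = (if i = p then a * B $$ (q,j) else if i = q then - cnj a * B $$ (p,j) else 0)"
  unfolding mult_entry[OF Pm_carrier assms(6) assms(4,5)] using assms(1-4) by (rule Pm_left)

lemma Pm_mult_right:
  assumes "p \<noteq> q" "p < n" "q < n" "i < n" "j < n" "B \<in> carrier_mat n n"
  shows "(B * Pm n p q a) $$ (i,j) = (if j = q then B $$ (i,p) * a else if j = p then - B $$ (i,q) * cnj a else 0)"
  unfolding mult_entry[OF assms(6) Pm_carrier assms(4,5)] using assms(1-3,5) by (rule Pm_right)

lemma Pm_prod3:
  assumes "p \<noteq> q" "q \<noteq> r" "p \<noteq> r" "p < n" "q < n" "r < n" "i < n" "j < n"
  shows "(Pm n p q a * Pm n q r b) $$ (i,j) = (if i = p \<and> j = r then a * b else 0)"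
  unfolding Pm_mult_left[OF assms(1,4,5,7,8) Pm_carrier]
  using assms by (simp add: Pm_entry)

lemma Pm_prod2:
  assumes "p \<noteq> q" "p < n" "q < n" "i < n" "j < n"
  shows "(Pm n p q a * Pm n q p b) $$ (i,j) = (if i = p \<and> j = p then a * b else if i = q \<and> j = q then cnj a * cnj b else 0)"
  unfolding Pm_mult_left[OF assms(1,2,3,4,5) Pm_carrier]
  using assms by (simp add: Pm_entry)

lemma Pm_bracket3:
  assumes "p \<noteq> q" "q \<noteq> r" "p \<noteq> r" "p < n" "q < n" "r < n"
  shows "Pm n p q a * Pm n q r b - Pm n q r b * Pm n p q a = Pm n p r (a * b)"
proof (rule eq_matI)
  fix i j assume "i < dim_row (Pm n p r (a * b))" "j < dim_col (Pm n p r (a * b))"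
  hence ij: "i<n" "j<n" by auto
  have 1: "(Pm n q r b * Pm n p q a) $$ (i,j) = (if i = r \<and> j = p then cnj b * cnj a else 0)"
    unfolding Pm_mult_left[OF assms(2,5,6) ij Pm_carrier]
    using assms ij by (simp add: Pm_entry)
  have "(Pm n p q a * Pm n q r b - Pm n q r b * Pm n p q a) $$ (i, j)
     = (Pm n p q a * Pm n q r b) $$ (i,j) - (Pm n q r b * Pm n p q a) $$ (i,j)"
    using ij by simp
  also have "\<dots> = Pm n p r (a * b) $$ (i, j)"
    unfolding 1 Pm_prod3[OF assms ij] using ij assms by (simp add: Pm_entry)
  finally show "(Pm n p q a * Pm n q r b - Pm n q r b * Pm n p q a) $$ (i, j) = Pm n p r (a * b) $$ (i, j)" .
qed auto

lemma Pm_bracket2: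
  assumes "p \<noteq> q" "p < n" "q < n"
  shows "Pm n p q a * Pm n q p b - Pm n q p b * Pm n p q a
       = Dg n (\<lambda>i. if i = p then a * b - cnj (a * b) else if i = q then cnj (a * b) - a * b else 0)"
    (is "_ = Dg n ?d")
proof (rule eq_matI)
  fix i j assume "i < dim_row (Dg n ?d)" "j < dim_col (Dg n ?d)"
  hence ij: "i<n" "j<n" by auto
  have "(Pm n p q a * Pm n q p b - Pm n q p b * Pm n p q a) $$ (i, j)
     = (Pm n p q a * Pm n q p b) $$ (i,j) - (Pm n q p b * Pm n p q a) $$ (i,j)"
    using ij by simp
  also have "\<dots> = Dg n ?d $$ (i, j)"
    unfolding Pm_prod2[OF assms ij] Pm_prod2[OF assms(1)[symmetric] assms(3,2) ij]
    using ij assms by (auto simp: Dg_entry mult.commute)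
  finally show "(Pm n p q a * Pm n q p b - Pm n q p b * Pm n p q a) $$ (i, j) = Dg n ?d $$ (i, j)" .
qed auto


lemma Pm_su: assumes "p \<noteq> q" "p < n" "q < n" shows "Pm n p q a \<in> su n"
proof -
  have "(\<Sum>i<n. Pm n p q a $$ (i,i)) = 0" using assms by (intro sum.neutral) (auto simp: Pm_entry)
  moreover have "\<forall>i<n. \<forall>j<n. Pm n p q a $$ (i,j) = - cnj (Pm n p q a $$ (j,i))"
  proof (intro allI impI)
    fix i j assume "i < n" "j < n"
    thus "Pm n p q a $$ (i,j) = - cnj (Pm n p q a $$ (j,i))"
      using assms by (simp add: Pm_entry)
  qed
  ultimately show ?thesis unfolding su_iff using Pm_carrier by blast
qed

lemma Dg_offdiag: "i<n \<Longrightarrow> j<n \<Longrightarrow> i \<noteq> j \<Longrightarrow> Dg n d $$ (i,j) = 0"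
  by (simp add: Dg_entry)

lemma Dg_su: assumes "\<And>i. i < n \<Longrightarrow> Re (d i) = 0" "(\<Sum>i<n. d i) = 0" shows "Dg n d \<in> su n"
proof -
  have "(\<Sum>i<n. Dg n d $$ (i,i)) = (\<Sum>i<n. d i)" by (rule sum.cong) (simp_all add: Dg_entry)
  hence 1: "(\<Sum>i<n. Dg n d $$ (i,i)) = 0" using assms(2) by simp
  have 2: "\<forall>i<n. \<forall>j<n. Dg n d $$ (i,j) = - cnj (Dg n d $$ (j,i))"
  proof (intro allI impI)
    fix i j assume ij: "i < n" "j < n"
    have e: "d i = - cnj (d i)" using assms(1)[OF ij(1)] by (simp add: complex_eq_iff)
    have a1: "Dg n d $$ (i,j) = (if i = j then d i else 0)" by (simp add: Dg_entry ij)
    have a2: "Dg n d $$ (j,i) = (if i = j then d i else 0)" by (auto simp: Dg_entry ij)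
    show "Dg n d $$ (i,j) = - cnj (Dg n d $$ (j,i))"
    proof (cases "i = j")
      case True show ?thesis unfolding a1 a2 if_P[OF True] by (rule e)
    next
      case False show ?thesis unfolding a1 a2 if_not_P[OF False] by simp
    qed
  qed
  show ?thesis unfolding su_iff using 1 2 Dg_carrier by blast
qed

lemma Pm_swap: "Pm n q p b = Pm n p q (- cnj b)" if "p \<noteq> q"
proof (rule eq_matI)
  fix i j assume "i < dim_row (Pm n p q (- cnj b))" "j < dim_col (Pm n p q (- cnj b))"
  hence "i < n" "j < n" by auto
  thus "Pm n q p b $$ (i, j) = Pm n p q (- cnj b) $$ (i, j)" using that by (simp add: Pm_entry)
qed auto

lemma Pm_add: "Pm n p q (a + b) = Pm n p q a + Pm n p q b"
proof (rule eq_matI)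
  fix i j assume "i < dim_row (Pm n p q a + Pm n p q b)" "j < dim_col (Pm n p q a + Pm n p q b)"
  hence "i < n" "j < n" by auto
  thus "Pm n p q (a + b) $$ (i, j) = (Pm n p q a + Pm n p q b) $$ (i, j)"
    by (cases "i = p"; cases "j = q"; cases "i = q"; cases "j = p"; simp add: Pm_entry)
qed auto

lemma Pm_scale: "Pm n p q (of_real c * a) = of_real c \<cdot>\<^sub>m Pm n p q a"
proof (rule eq_matI)
  fix i j assume "i < dim_row (of_real c \<cdot>\<^sub>m Pm n p q a)" "j < dim_col (of_real c \<cdot>\<^sub>m Pm n p q a)"
  hence "i < n" "j < n" by auto
  thus "Pm n p q (of_real c * a) $$ (i, j) = (of_real c \<cdot>\<^sub>m Pm n p q a) $$ (i, j)"
    by (cases "i = p"; cases "j = q"; cases "i = q"; cases "j = p"; simp add: Pm_entry)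
qed auto

lemma diag_bracket_entry':
  fixes D X :: "complex mat"
  assumes D: "D \<in> carrier_mat n n" and dg: "\<And>i j. i<n \<Longrightarrow> j<n \<Longrightarrow> i \<noteq> j \<Longrightarrow> D $$ (i,j) = 0"
    and X: "X \<in> carrier_mat n n" and ij: "i<n" "j<n"
  shows "(X * D - D * X) $$ (i,j) = (D $$ (j,j) - D $$ (i,i)) * X $$ (i,j)"
proof -
  have "(X * D - D * X) $$ (i,j) = - ((D * X - X * D) $$ (i,j))" using D X ij by simp
  also have "\<dots> = (D $$ (j,j) - D $$ (i,i)) * X $$ (i,j)"
    using diag_bracket_entry[OF D dg X ij] by (simp add: algebra_simps)
  finally show ?thesis .
qed

lemma Pm_Dg_bracket:
  assumes "p \<noteq> q" "p < n" "q < n" "Re (d p - d q) = 0"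
  shows "Pm n p q a * Dg n d - Dg n d * Pm n p q a = Pm n p q ((d q - d p) * a)"
proof (rule eq_matI)
  fix i j assume "i < dim_row (Pm n p q ((d q - d p) * a))" "j < dim_col (Pm n p q ((d q - d p) * a))"
  hence ij: "i<n" "j<n" by auto
  have e: "cnj (d q - d p) = d p - d q" using assms(4) by (simp add: complex_eq_iff)
  have b: "(Pm n p q a * Dg n d - Dg n d * Pm n p q a) $$ (i, j) = (Dg n d $$ (j,j) - Dg n d $$ (i,i)) * Pm n p q a $$ (i,j)"
    by (rule diag_bracket_entry'[of "Dg n d" n "Pm n p q a" i j]) (use ij in \<open>auto simp: Dg_entry\<close>)
  have e': "cnj ((d q - d p) * a) = (d p - d q) * cnj a" using e by simp
  have e3: "cnj (d q) - cnj (d p) = d p - d q" using e by simp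
  show "(Pm n p q a * Dg n d - Dg n d * Pm n p q a) $$ (i, j) = Pm n p q ((d q - d p) * a) $$ (i, j)"
    unfolding b using ij assms(1)
    by (cases "i = p"; cases "j = q"; cases "i = q"; cases "j = p"; simp add: Dg_entry Pm_entry e3)
qed auto

lemma filter_entry:
  fixes X :: "complex mat" and p :: nat
  assumes X: "X \<in> carrier_mat n n" and ij: "i < n" "j < n"
  defines "D \<equiv> Dg n (\<lambda>i. \<i> * ((if i = p then 1 else 0) - 1 / of_nat n))"
  shows "((-1) \<cdot>\<^sub>m ((X * D - D * X) * D - D * (X * D - D * X))) $$ (i,j) = (if (i = p) \<noteq> (j = p) then X $$ (i,j) else 0)"
proof -
  have Dc: "D \<in> carrier_mat n n" unfolding D_def by simp
  have dg: "\<And>i j. i<n \<Longrightarrow> j<n \<Longrightarrow> i \<noteq> j \<Longrightarrow> D $$ (i,j) = 0" unfolding D_def by (simp add: Dg_entry)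
  have Yc: "X * D - D * X \<in> carrier_mat n n" using X Dc by auto
  have e1: "((X * D - D * X) * D - D * (X * D - D * X)) $$ (i,j) = (D $$ (j,j) - D $$ (i,i)) * ((D $$ (j,j) - D $$ (i,i)) * X $$ (i,j))"
    using diag_bracket_entry'[OF Dc dg Yc ij] diag_bracket_entry'[OF Dc dg X ij] by simp
  have e2: "D $$ (j,j) - D $$ (i,i) = \<i> * ((if j = p then 1 else 0) - (if i = p then 1 else 0))"
    unfolding D_def using ij by (simp add: Dg_entry algebra_simps)
  have e3: "((-1) \<cdot>\<^sub>m ((X * D - D * X) * D - D * (X * D - D * X))) $$ (i,j) = - (((X * D - D * X) * D - D * (X * D - D * X)) $$ (i,j))"
    using ij X Dc by simp
  show ?thesis unfolding e3 e1 e2 by (cases "i = p"; cases "j = p") simp_all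
qed

lemma filter_su: assumes "p < n" shows "Dg n (\<lambda>i. \<i> * ((if i = p then 1 else 0) - 1 / of_nat n)) \<in> su n"
proof (rule Dg_su)
  show "(\<Sum>i<n. \<i> * ((if i = p then 1 else 0) - 1 / of_nat n)) = 0"
    using assms by (simp add: sum_distrib_left[symmetric] sum_subtractf)
qed simp


lemma sum_two:
  fixes x y :: complex and n :: nat
  assumes "p \<noteq> q" "p < n" "q < n"
  shows "(\<Sum>k<n. if k = p then x else if k = q then y else 0) = x + y"
proof -
  have "(\<Sum>k<n. if k = p then x else if k = q then y else 0) = (\<Sum>k<n. (if k = p then x else 0) + (if k = q then y else 0))"
    using assms(1) by (intro sum.cong) auto
  also have "\<dots> = (\<Sum>k<n. if k = p then x else 0) + (\<Sum>k<n. if k = q then y else 0)"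
    by (simp add: sum.distrib)
  also have "(\<Sum>k<n. if k = p then x else 0) = x" by (subst sum_single[where c=p]) (use assms in auto)
  also have "(\<Sum>k<n. if k = q then y else 0) = y" by (subst sum_single[where c=q]) (use assms in auto)
  finally show ?thesis .
qed

lemma Dg_scale: "of_real c \<cdot>\<^sub>m Dg n d = Dg n (\<lambda>i. of_real c * d i)"
proof (rule eq_matI)
  fix i j assume "i < dim_row (Dg n (\<lambda>i. of_real c * d i))" "j < dim_col (Dg n (\<lambda>i. of_real c * d i))"
  hence "i < n" "j < n" by auto
  thus "(of_real c \<cdot>\<^sub>m Dg n d) $$ (i, j) = Dg n (\<lambda>i. of_real c * d i) $$ (i, j)" by (simp add: Dg_entry)
qed auto

lemma Dpq_su: assumes "p \<noteq> q" "p < n" "q < n"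
  shows "Dg n (\<lambda>k. if k = p then \<i> else if k = q then - \<i> else 0) \<in> su n"
  by (rule Dg_su) (use assms sum_two[OF assms, of \<i> "-\<i>"] in auto)

locale lideal =
  fixes I :: "complex mat set" and N :: nat
  assumes N2: "N \<ge> 2"
    and Iadd: "\<And>X Y. X \<in> I \<Longrightarrow> Y \<in> I \<Longrightarrow> X + Y \<in> I"
    and Iscale: "\<And>c X. X \<in> I \<Longrightarrow> of_real c \<cdot>\<^sub>m X \<in> I"
    and Ibr: "\<And>X Y. X \<in> I \<Longrightarrow> Y \<in> su N \<Longrightarrow> X * Y - Y * X \<in> I"
    and Isub: "I \<subseteq> su N"
begin

lemma all_alpha:
  assumes P: "Pm N p q a \<in> I" and a: "a \<noteq> 0" and pq: "p \<noteq> q" "p < N" "q < N"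
  shows "Pm N p q b \<in> I"
proof -
  define d where "d = (\<lambda>k. if k = p then \<i> else if k = q then - \<i> else (0::complex))"
  have Dsu: "Dg N d \<in> su N" unfolding d_def by (rule Dpq_su[OF pq])
  have "Pm N p q a * Dg N d - Dg N d * Pm N p q a \<in> I" by (rule Ibr[OF P Dsu])
  moreover have "Pm N p q a * Dg N d - Dg N d * Pm N p q a = Pm N p q ((d q - d p) * a)"
    by (rule Pm_Dg_bracket[OF pq]) (use pq in \<open>simp add: d_def\<close>)
  moreover have "d q - d p = - 2 * \<i>" using pq by (simp add: d_def)
  ultimately have P2: "Pm N p q (- 2 * \<i> * a) \<in> I" by simp
  define u where "u = Re (b / a)"
  define w where "w = Im (b / a)"
  have "complex_of_real u * a + complex_of_real (- w / 2) * (- 2 * \<i> * a) = (complex_of_real u + \<i> * complex_of_real w) * a"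
    by (simp add: algebra_simps)
  also have "complex_of_real u + \<i> * complex_of_real w = b / a"
    unfolding u_def w_def by (simp add: complex_eq_iff)
  finally have bb: "b = complex_of_real u * a + complex_of_real (- w / 2) * (- 2 * \<i> * a)" using a by simp
  have e: "Pm N p q b = of_real u \<cdot>\<^sub>m Pm N p q a + of_real (- w / 2) \<cdot>\<^sub>m Pm N p q (- 2 * \<i> * a)"
    by (subst bb) (simp only: Pm_add Pm_scale)
  show ?thesis unfolding e by (intro Iadd Iscale P P2)
qed

definition good :: "nat \<Rightarrow> nat \<Rightarrow> bool" where
  "good p q \<longleftrightarrow> (\<forall>b. Pm N p q b \<in> I)"

lemma good_sym: assumes "good p q" "p \<noteq> q" shows "good q p"
  using assms unfolding good_def by (metis Pm_swap)

lemma good_ext: assumes "good p q" "p \<noteq> q" "q \<noteq> r" "p \<noteq> r" "p < N" "q < N" "r < N"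
  shows "good p r"
  unfolding good_def
proof
  fix b
  have "Pm N p q 1 * Pm N q r b - Pm N q r b * Pm N p q 1 \<in> I"
    using assms(1) Pm_su[OF assms(3,6,7)] Ibr unfolding good_def by blast
  thus "Pm N p r b \<in> I" using Pm_bracket3[OF assms(2-7), of 1 b] by simp
qed

lemma all_good: assumes "good p q" "p \<noteq> q" "p < N" "q < N" "a \<noteq> b" "a < N" "b < N"
  shows "good a b"
proof -
  have gq: "good q p" using good_sym assms by blast
  have g1: "good p x" if "x < N" "x \<noteq> p" for x
    using assms good_ext that by (cases "x = q") auto
  have g2: "good q x" if "x < N" "x \<noteq> q" for x
    using assms gq good_ext that by (cases "x = p") auto
  show ?thesis
  proof (cases "a = p")
    case True thus ?thesis using g1 assms by auto
  next
    case False
    hence "good a p" using g1 good_sym assms by auto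
    thus ?thesis using good_ext[of a p b] assms False by (cases "b = p") auto
  qed
qed

lemma good_diag: assumes "good a b" "a \<noteq> b" "a < N" "b < N"
  shows "Dg N (\<lambda>k. if k = a then \<i> else if k = b then - \<i> else 0) \<in> I"
proof -
  have "Pm N a b 1 * Pm N b a \<i> - Pm N b a \<i> * Pm N a b 1 \<in> I"
    using assms(1) Pm_su[of b a N \<i>] assms Ibr unfolding good_def by auto
  hence "Dg N (\<lambda>i. if i = a then 1 * \<i> - cnj (1 * \<i>) else if i = b then cnj (1 * \<i>) - 1 * \<i> else 0) \<in> I"
    using Pm_bracket2[OF assms(2-4), of 1 \<i>] by simp
  hence "of_real (1/2) \<cdot>\<^sub>m Dg N (\<lambda>i. if i = a then 1 * \<i> - cnj (1 * \<i>) else if i = b then cnj (1 * \<i>) - 1 * \<i> else 0) \<in> I"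
    by (rule Iscale)
  moreover have "(\<lambda>i. complex_of_real (1/2) * (if i = a then 1 * \<i> - cnj (1 * \<i>) else if i = b then cnj (1 * \<i>) - 1 * \<i> else 0))
     = (\<lambda>k. if k = a then \<i> else if k = b then - \<i> else 0)"
    by (auto simp: fun_eq_iff)
  ultimately show ?thesis unfolding Dg_scale by simp
qed

end

definition Lm :: "nat \<Rightarrow> complex mat \<Rightarrow> (nat \<times> nat \<Rightarrow> real)" where
  "Lm n A = (\<lambda>(a,b). if a < n \<and> b < n then (if a < b then Re (A $$ (a,b)) else if b < a then Im (A $$ (b,a)) else Im (A $$ (a,a))) else 0)"

definition tr :: "nat \<Rightarrow> (nat \<times> nat \<Rightarrow> real) \<Rightarrow> real" where
  "tr n v = (\<Sum>c<n. v (c,c))"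

definition Mt :: "nat \<Rightarrow> (nat \<times> nat \<Rightarrow> real) \<Rightarrow> complex mat" where
  "Mt n v = mat n n (\<lambda>(a,b). if a < b then Complex (v (a,b)) (v (b,a)) else if b < a then Complex (- v (b,a)) (v (a,b))
      else \<i> * complex_of_real (v (a,a) - tr n v / real n))"

lemma Mt_carrier[simp]: "Mt n v \<in> carrier_mat n n" by (simp add: Mt_def)
lemma Mt_dim[simp]: "dim_row (Mt n v) = n" "dim_col (Mt n v) = n" by (auto simp: Mt_def)
lemma Mt_entry: "a < n \<Longrightarrow> b < n \<Longrightarrow> Mt n v $$ (a,b) = (if a < b then Complex (v (a,b)) (v (b,a)) else if b < a then Complex (- v (b,a)) (v (a,b))
      else \<i> * complex_of_real (v (a,a) - tr n v / real n))"
  by (simp add: Mt_def)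

lemma Lm_entry: "a < n \<Longrightarrow> b < n \<Longrightarrow> Lm n A (a,b) = (if a < b then Re (A $$ (a,b)) else if b < a then Im (A $$ (b,a)) else Im (A $$ (a,a)))"
  by (simp add: Lm_def)

lemma Lm_out: "\<not> (a < n \<and> b < n) \<Longrightarrow> Lm n A (a,b) = 0"
  unfolding Lm_def by auto

lemma Mt_su: "Mt n v \<in> su n"
proof -
  have t: "(\<Sum>a<n. v (a,a) - tr n v / real n) = 0"
  proof (cases "n = 0")
    case False thus ?thesis by (simp add: sum_subtractf tr_def)
  qed (simp)
  have "(\<Sum>a<n. Mt n v $$ (a,a)) = (\<Sum>a<n. \<i> * complex_of_real (v (a,a) - tr n v / real n))"
    by (rule sum.cong) (simp_all add: Mt_entry)
  also have "\<dots> = \<i> * complex_of_real (\<Sum>a<n. v (a,a) - tr n v / real n)"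
    by (simp add: sum_distrib_left)
  also have "\<dots> = 0" unfolding t by simp
  finally have 1: "(\<Sum>a<n. Mt n v $$ (a,a)) = 0" .
  have 2: "\<forall>i<n. \<forall>j<n. Mt n v $$ (i,j) = - cnj (Mt n v $$ (j,i))"
  proof (intro allI impI)
    fix i j assume "i < n" "j < n"
    thus "Mt n v $$ (i,j) = - cnj (Mt n v $$ (j,i))"
      by (cases "i < j"; cases "j < i") (simp_all add: Mt_entry complex_eq_iff)
  qed
  show ?thesis unfolding su_iff using 1 2 Mt_carrier by blast
qed

lemma su_entry: "A \<in> su n \<Longrightarrow> i < n \<Longrightarrow> j < n \<Longrightarrow> A $$ (i,j) = - cnj (A $$ (j,i))"
  unfolding su_iff by blast

lemma su_trace: "A \<in> su n \<Longrightarrow> (\<Sum>i<n. A $$ (i,i)) = 0"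
  unfolding su_iff by blast

lemma su_diag_re: "A \<in> su n \<Longrightarrow> i < n \<Longrightarrow> Re (A $$ (i,i)) = 0"
  using su_entry[of A n i i] by (simp add: complex_eq_iff)

lemma tr_Lm: assumes "A \<in> su n" shows "tr n (Lm n A) = 0"
proof -
  have "tr n (Lm n A) = (\<Sum>c<n. Im (A $$ (c,c)))" unfolding tr_def by (rule sum.cong) (simp_all add: Lm_entry)
  also have "\<dots> = Im (\<Sum>c<n. A $$ (c,c))" by (simp add: Im_sum)
  also have "\<dots> = 0" using su_trace[OF assms] by simp
  finally show ?thesis .
qed

lemma Mt_Lm: assumes A: "A \<in> su n" shows "Mt n (Lm n A) = A"
proof (rule eq_matI)
  have c: "A \<in> carrier_mat n n" using A su_iff by blast
  fix i j assume "i < dim_row A" "j < dim_col A"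
  hence ij: "i < n" "j < n" using c by auto
  have t: "tr n (Lm n A) = 0" by (rule tr_Lm[OF A])
  show "Mt n (Lm n A) $$ (i, j) = A $$ (i, j)"
  proof (cases "i < j")
    case True thus ?thesis using ij by (simp add: Mt_entry Lm_entry complex_eq_iff)
  next
    case False note F = False
    show ?thesis
    proof (cases "j < i")
      case True
      have "A $$ (i,j) = - cnj (A $$ (j,i))" by (rule su_entry[OF A ij])
      thus ?thesis using ij True by (simp add: Mt_entry Lm_entry complex_eq_iff)
    next
      case False
      hence "i = j" using F by simp
      thus ?thesis using ij t su_diag_re[OF A ij(1)] by (simp add: Mt_entry Lm_entry complex_eq_iff)
    qed
  qed
next
  have c: "A \<in> carrier_mat n n" using A su_iff by blast
  thus "dim_row (Mt n (Lm n A)) = dim_row A" "dim_col (Mt n (Lm n A)) = dim_col A" by auto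
qed

lemma Lm_Mt: assumes sup: "\<And>a b. \<not> (a < n \<and> b < n) \<Longrightarrow> v (a,b) = 0" and t: "tr n v = 0"
  shows "Lm n (Mt n v) = v"
proof (rule ext)
  fix x :: "nat \<times> nat"
  obtain a b where x: "x = (a,b)" by (cases x)
  show "Lm n (Mt n v) x = v x"
  proof (cases "a < n \<and> b < n")
    case True
    thus ?thesis unfolding x using t by (cases "a < b"; cases "b < a") (simp_all add: Lm_entry Mt_entry)
  next
    case False thus ?thesis unfolding x using sup by (simp add: Lm_out)
  qed
qed

lemma tr_add: "tr n (v + w) = tr n v + tr n w" by (simp add: tr_def sum.distrib)
lemma tr_scale: "tr n (\<lambda>x. c * v x) = c * tr n v" by (simp add: tr_def sum_distrib_left)

lemma Mt_add: "Mt n (v + w) = Mt n v + Mt n w"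
proof (rule eq_matI)
  fix i j assume "i < dim_row (Mt n v + Mt n w)" "j < dim_col (Mt n v + Mt n w)"
  hence ij: "i < n" "j < n" by auto
  show "Mt n (v + w) $$ (i, j) = (Mt n v + Mt n w) $$ (i, j)"
    using ij by (cases "i < j"; cases "j < i") (simp_all add: Mt_entry tr_add complex_eq_iff add_divide_distrib)
qed auto

lemma Mt_scale: "Mt n (\<lambda>x. c * v x) = of_real c \<cdot>\<^sub>m Mt n v"
proof (rule eq_matI)
  fix i j assume "i < dim_row (of_real c \<cdot>\<^sub>m Mt n v)" "j < dim_col (of_real c \<cdot>\<^sub>m Mt n v)"
  hence ij: "i < n" "j < n" by auto
  show "Mt n (\<lambda>x. c * v x) $$ (i, j) = (of_real c \<cdot>\<^sub>m Mt n v) $$ (i, j)"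
    using ij by (cases "i < j"; cases "j < i") (simp_all add: Mt_entry tr_scale complex_eq_iff algebra_simps)
qed auto

lemma Mt_zero: "Mt n (\<lambda>x. 0) = 0\<^sub>m n n"
proof (rule eq_matI)
  fix i j assume "i < dim_row (0\<^sub>m n n :: complex mat)" "j < dim_col (0\<^sub>m n n :: complex mat)"
  hence ij: "i < n" "j < n" by auto
  show "Mt n (\<lambda>x. 0) $$ (i, j) = 0\<^sub>m n n $$ (i, j)"
    using ij by (simp add: Mt_entry tr_def complex_eq_iff)
qed auto

lemma Lm_add: "A \<in> carrier_mat n n \<Longrightarrow> B \<in> carrier_mat n n \<Longrightarrow> Lm n (A + B) = Lm n A + Lm n B"
  by (rule ext) (auto simp: Lm_def)

lemma Lm_scale: "A \<in> carrier_mat n n \<Longrightarrow> Lm n (of_real c \<cdot>\<^sub>m A) = (\<lambda>x. c * Lm n A x)"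
  by (rule ext) (auto simp: Lm_def)

definition dl :: "nat \<times> nat \<Rightarrow> nat \<times> nat \<Rightarrow> real" where
  "dl p = (\<lambda>x. if x = p then 1 else 0)"

lemma Mt_dl_lt: assumes "a < b" "b < n" shows "Mt n (dl (a,b)) = Pm n a b 1"
proof (rule eq_matI)
  fix i j assume "i < dim_row (Pm n a b 1)" "j < dim_col (Pm n a b 1)"
  hence ij: "i < n" "j < n" by auto
  have t: "tr n (dl (a,b)) = 0" unfolding tr_def dl_def using assms by (intro sum.neutral) auto
  show "Mt n (dl (a,b)) $$ (i, j) = Pm n a b 1 $$ (i, j)"
    using ij assms t by (cases "i = a"; cases "j = b"; cases "i = b"; cases "j = a"; simp add: Mt_entry Pm_entry dl_def complex_eq_iff)
qed auto

lemma Mt_dl_gt: assumes "a < b" "b < n" shows "Mt n (dl (b,a)) = Pm n a b \<i>"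
proof (rule eq_matI)
  fix i j assume "i < dim_row (Pm n a b \<i>)" "j < dim_col (Pm n a b \<i>)"
  hence ij: "i < n" "j < n" by auto
  have t: "tr n (dl (b,a)) = 0" unfolding tr_def dl_def using assms by (intro sum.neutral) auto
  show "Mt n (dl (b,a)) $$ (i, j) = Pm n a b \<i> $$ (i, j)"
    using ij assms t by (cases "i = a"; cases "j = b"; cases "i = b"; cases "j = a"; simp add: Mt_entry Pm_entry dl_def complex_eq_iff)
qed auto

lemma Mt_dl_diag: assumes "0 < c" "c < n"
  shows "Mt n (dl (c,c) - dl (0,0)) = Dg n (\<lambda>k. if k = c then \<i> else if k = 0 then - \<i> else 0)"
proof (rule eq_matI)
  fix i j assume "i < dim_row (Dg n (\<lambda>k. if k = c then \<i> else if k = 0 then - \<i> else 0))"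
     "j < dim_col (Dg n (\<lambda>k. if k = c then \<i> else if k = 0 then - \<i> else 0))"
  hence ij: "i < n" "j < n" by auto
  have "tr n (dl (c,c) - dl (0,0)) = tr n (dl (c,c)) - tr n (dl (0,0))"
    by (simp add: tr_def sum_subtractf)
  also have "tr n (dl (c,c)) = 1" unfolding tr_def dl_def using assms
    by (subst sum.remove[where x=c]) (auto intro!: sum.neutral)
  also have "tr n (dl (0,0)) = 1" unfolding tr_def dl_def using assms
    by (subst sum.remove[where x=0]) (auto intro!: sum.neutral)
  finally have t: "tr n (dl (c,c) - dl (0,0)) = 0" by linarith
  show "Mt n (dl (c,c) - dl (0,0)) $$ (i, j) = Dg n (\<lambda>k. if k = c then \<i> else if k = 0 then - \<i> else 0) $$ (i, j)"
    using ij assms t by (cases "i = j"; cases "i = c"; cases "i = 0"; simp add: Mt_entry Dg_entry dl_def complex_eq_iff)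
qed auto


lemma sum_apply_fun: "(\<Sum>x\<in>F. f x) y = (\<Sum>x\<in>F. f x y)"
  by (induction F rule: infinite_finite_induct) (auto simp: plus_fun_def zero_fun_def)

context lideal begin

lemma exists_P:
  assumes X0: "X0 \<in> I" and nz0: "X0 \<noteq> 0\<^sub>m N N"
  shows "\<exists>p q a. p \<noteq> q \<and> p < N \<and> q < N \<and> a \<noteq> 0 \<and> Pm N p q a \<in> I"
proof -
  have Xs: "X0 \<in> su N" using X0 Isub by blast
  hence Xc: "X0 \<in> carrier_mat N N" using su_iff by blast
  have nz: "\<exists>i<N. \<exists>j<N. X0 $$ (i,j) \<noteq> 0"
  proof (rule ccontr)
    assume "\<not> ?thesis"
    hence "X0 = 0\<^sub>m N N" using Xc by (intro eq_matI) auto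
    thus False using nz0 by simp
  qed
  have m1: "complex_of_real (-1) = -1" by simp
  show ?thesis
  proof (cases "\<exists>p q. p < N \<and> q < N \<and> p \<noteq> q \<and> X0 $$ (p,q) \<noteq> 0")
    case True
    then obtain p q where pq: "p < N" "q < N" "p \<noteq> q" "X0 $$ (p,q) \<noteq> 0" by blast
    define Dp where "Dp = Dg N (\<lambda>i. \<i> * ((if i = p then 1 else 0) - 1 / of_nat N))"
    define Dq where "Dq = Dg N (\<lambda>i. \<i> * ((if i = q then 1 else 0) - 1 / of_nat N))"
    have Dps: "Dp \<in> su N" unfolding Dp_def by (rule filter_su[OF pq(1)])
    have Dqs: "Dq \<in> su N" unfolding Dq_def by (rule filter_su[OF pq(2)])
    define Y1 where "Y1 = (-1) \<cdot>\<^sub>m ((X0 * Dp - Dp * X0) * Dp - Dp * (X0 * Dp - Dp * X0))"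
    define Y2 where "Y2 = (-1) \<cdot>\<^sub>m ((Y1 * Dq - Dq * Y1) * Dq - Dq * (Y1 * Dq - Dq * Y1))"
    have Y1I: "Y1 \<in> I" unfolding Y1_def by (rule Iscale[of _ "-1", unfolded m1], intro Ibr X0 Dps)
    hence Y2I: "Y2 \<in> I" unfolding Y2_def by (intro Iscale[of _ "-1", unfolded m1] Ibr Dqs)
    have Dpc: "Dp \<in> carrier_mat N N" unfolding Dp_def by simp
    have Dqc: "Dq \<in> carrier_mat N N" unfolding Dq_def by simp
    have Y1c: "Y1 \<in> carrier_mat N N" unfolding Y1_def using Xc Dpc by auto
    have Y1e: "Y1 $$ (i,j) = (if (i = p) \<noteq> (j = p) then X0 $$ (i,j) else 0)" if "i < N" "j < N" for i j
      unfolding Y1_def Dp_def by (rule filter_entry[OF Xc that])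
    have Y2e: "Y2 $$ (i,j) = (if (i = q) \<noteq> (j = q) then Y1 $$ (i,j) else 0)" if "i < N" "j < N" for i j
      unfolding Y2_def Dq_def by (rule filter_entry[OF Y1c that])
    have qp: "X0 $$ (q,p) = - cnj (X0 $$ (p,q))" by (rule su_entry[OF Xs pq(2,1)])
    have "Y2 = Pm N p q (X0 $$ (p,q))"
    proof (rule eq_matI)
      fix i j assume "i < dim_row (Pm N p q (X0 $$ (p,q)))" "j < dim_col (Pm N p q (X0 $$ (p,q)))"
      hence ij: "i < N" "j < N" by auto
      show "Y2 $$ (i, j) = Pm N p q (X0 $$ (p,q)) $$ (i, j)"
        unfolding Y2e[OF ij] Y1e[OF ij] Pm_entry[OF ij] using pq(3) qp
        by (cases "i = p"; cases "j = q"; cases "i = q"; cases "j = p"; simp)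
    next
      show "dim_row Y2 = dim_row (Pm N p q (X0 $$ (p,q)))" "dim_col Y2 = dim_col (Pm N p q (X0 $$ (p,q)))"
        unfolding Y2_def using Y1c Dqc by simp_all
    qed
    hence "Pm N p q (X0 $$ (p,q)) \<in> I" using Y2I by simp
    thus ?thesis using pq by blast
  next
    case False
    have off: "X0 $$ (i,j) = 0" if "i < N" "j < N" "i \<noteq> j" for i j
      using False that by auto
    have "\<exists>a<N. \<exists>b<N. X0 $$ (a,a) \<noteq> X0 $$ (b,b)"
    proof (rule ccontr)
      assume H: "\<not> ?thesis"
      have N0: "0 < N" using N2 by simp
      have eq: "X0 $$ (a,a) = X0 $$ (0,0)" if "a < N" for a
        using H that N0 by blast
      have "(\<Sum>i<N. X0 $$ (i,i)) = (\<Sum>i<N. X0 $$ (0,0))" by (rule sum.cong) (use eq in blast)+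
      hence "of_nat N * X0 $$ (0,0) = 0" using su_trace[OF Xs] by simp
      hence z: "X0 $$ (0,0) = 0" using N2 by simp
      have "X0 $$ (i,j) = 0" if "i < N" "j < N" for i j
      proof (cases "i = j")
        case True thus ?thesis using eq[OF that(1)] z by simp
      qed (use off[OF that] in simp)
      thus False using nz by blast
    qed
    then obtain a b where ab: "a < N" "b < N" "X0 $$ (a,a) \<noteq> X0 $$ (b,b)" by blast
    hence anb: "a \<noteq> b" by blast
    have PI: "X0 * Pm N a b 1 - Pm N a b 1 * X0 \<in> I" by (rule Ibr[OF X0 Pm_su[OF anb ab(1,2)]])
    have ca: "cnj (X0 $$ (a,a)) = - X0 $$ (a,a)" using su_diag_re[OF Xs ab(1)] by (simp add: complex_eq_iff)
    have cb: "cnj (X0 $$ (b,b)) = - X0 $$ (b,b)" using su_diag_re[OF Xs ab(2)] by (simp add: complex_eq_iff)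
    have "X0 * Pm N a b 1 - Pm N a b 1 * X0 = Pm N a b (X0 $$ (a,a) - X0 $$ (b,b))"
    proof (rule eq_matI)
      fix i j assume "i < dim_row (Pm N a b (X0 $$ (a,a) - X0 $$ (b,b)))" "j < dim_col (Pm N a b (X0 $$ (a,a) - X0 $$ (b,b)))"
      hence ij: "i < N" "j < N" by auto
      have b: "(X0 * Pm N a b 1 - Pm N a b 1 * X0) $$ (i, j) = (X0 $$ (i,i) - X0 $$ (j,j)) * Pm N a b 1 $$ (i,j)"
          by (rule diag_bracket_entry[of X0 N "Pm N a b 1" i j]) (use Xc off ij in auto)
      show "(X0 * Pm N a b 1 - Pm N a b 1 * X0) $$ (i, j) = Pm N a b (X0 $$ (a,a) - X0 $$ (b,b)) $$ (i, j)"
        unfolding b Pm_entry[OF ij] using anb ca cb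
        by (cases "i = a"; cases "j = b"; cases "i = b"; cases "j = a"; simp)
    qed (use Xc in auto)
    hence PI2: "Pm N a b (X0 $$ (a,a) - X0 $$ (b,b)) \<in> I" using PI by simp
    have nz2: "X0 $$ (a,a) - X0 $$ (b,b) \<noteq> 0" using ab by simp
    show ?thesis using PI2 nz2 anb ab(1,2) by blast
  qed
qed

end

lemma sum_single_gen:
  fixes f :: "'b \<Rightarrow> 'a::comm_monoid_add"
  assumes "finite S" "c \<in> S" "\<And>k. k \<in> S \<Longrightarrow> k \<noteq> c \<Longrightarrow> f k = 0"
  shows "sum f S = f c"
proof -
  have "sum f S = f c + sum f (S - {c})" using assms(1,2) by (subst sum.remove[where x=c]) auto
  also have "sum f (S - {c}) = 0" using assms(3) by (intro sum.neutral) auto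
  finally show ?thesis by simp
qed

context lideal begin

lemma zero_in: assumes "X0 \<in> I" shows "0\<^sub>m N N \<in> I"
proof -
  have Xc: "X0 \<in> carrier_mat N N" using assms Isub su_iff by blast
  have "of_real 0 \<cdot>\<^sub>m X0 = 0\<^sub>m N N" using Xc by (intro eq_matI) auto
  thus ?thesis using Iscale[OF assms, of 0] by simp
qed

lemma Mt_sum_in:
  assumes z: "0\<^sub>m N N \<in> I" and F: "finite F"
  shows "(\<forall>x\<in>F. Mt N (f x) \<in> I) \<Longrightarrow> Mt N (\<Sum>x\<in>F. f x) \<in> I"
  using F
proof (induction F rule: finite_induct)
  case empty
  have "(\<Sum>x\<in>{}. f x) = (\<lambda>x. 0)" by (simp add: zero_fun_def)
  thus ?case using z Mt_zero by simp
next
  case (insert x F)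
  have "Mt N (\<Sum>x\<in>insert x F. f x) = Mt N (f x) + Mt N (\<Sum>x\<in>F. f x)"
    using insert(1,2) by (simp add: Mt_add)
  show ?case unfolding \<open>Mt N (\<Sum>x\<in>insert x F. f x) = Mt N (f x) + Mt N (\<Sum>x\<in>F. f x)\<close>
    by (intro Iadd) (use insert in auto)
qed

lemma su_sub:
  assumes X0: "X0 \<in> I" and nz0: "X0 \<noteq> 0\<^sub>m N N"
  shows "su N \<subseteq> I"
proof
  obtain p q a where pqa: "p \<noteq> q" "p < N" "q < N" "a \<noteq> 0" "Pm N p q a \<in> I"
    using exists_P[OF X0 nz0] by blast
  have gpq: "good p q" unfolding good_def using all_alpha[OF pqa(5,4,1,2,3)] by blast
  have gall: "good a' b'" if "a' \<noteq> b'" "a' < N" "b' < N" for a' b'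
    by (rule all_good[OF gpq pqa(1-3) that])
  have z: "0\<^sub>m N N \<in> I" by (rule zero_in[OF X0])
  fix A assume A: "A \<in> su N"
  define w where "w = Lm N A"
  define Off where "Off = {x \<in> {..<N} \<times> {..<N}. fst x \<noteq> snd x}"
  define Dia where "Dia = {1..<N}"
  define S1 where "S1 = (\<Sum>p\<in>Off. (\<lambda>y. w p * dl p y))"
  define S2 where "S2 = (\<Sum>c\<in>Dia. (\<lambda>y. w (c,c) * (dl (c,c) - dl (0,0)) y))"
  have fOff: "finite Off" unfolding Off_def by simp
  have fDia: "finite Dia" unfolding Dia_def by simp
  have tw: "tr N w = 0" unfolding w_def by (rule tr_Lm[OF A])
  have N0: "0 < N" using N2 by simp
  have trsplit: "tr N w = w (0,0) + (\<Sum>c\<in>Dia. w (c,c))"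
    unfolding tr_def Dia_def using N0 by (simp add: lessThan_atLeast0 sum.atLeast_Suc_lessThan)
  have S1e: "S1 y = (if y \<in> Off then w y else 0)" for y
  proof -
    have "S1 y = (\<Sum>p\<in>Off. w p * dl p y)" unfolding S1_def by (rule sum_apply_fun)
    also have "\<dots> = (\<Sum>p\<in>Off. if p = y then w p else 0)" by (rule sum.cong) (auto simp: dl_def)
    also have "\<dots> = (if y \<in> Off then w y else 0)" using fOff by (simp add: sum.delta)
    finally show ?thesis .
  qed
  have S2e: "S2 y = (\<Sum>c\<in>Dia. w (c,c) * (dl (c,c) y - dl (0,0) y))" for y
    unfolding S2_def by (subst sum_apply_fun) simp
  have wS: "w = S1 + S2"
  proof (rule ext)
    fix y :: "nat \<times> nat"
    obtain a b where y: "y = (a,b)" by (cases y)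
    show "w y = (S1 + S2) y"
    proof (cases "a < N \<and> b < N")
      case inb: True
      show ?thesis
      proof (cases "a = b")
        case False
        hence "y \<in> Off" unfolding y Off_def using inb by simp
        moreover have "S2 y = 0" unfolding S2e using False y by (intro sum.neutral) (auto simp: dl_def)
        ultimately show ?thesis by (simp add: S1e)
      next
        case True
        hence "y \<notin> Off" unfolding y Off_def by simp
        hence s1: "S1 y = 0" by (simp add: S1e)
        show ?thesis
        proof (cases "a = 0")
          case True
          have "S2 y = (\<Sum>c\<in>Dia. - w (c,c))" unfolding S2e
            by (rule sum.cong) (use True \<open>a = b\<close> y in \<open>auto simp: dl_def Dia_def\<close>)
          also have "\<dots> = w y" using tw trsplit True \<open>a = b\<close> y by (simp add: sum_negf)
          finally show ?thesis using s1 by simp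
        next
          case False
          have "S2 y = w (a,a) * (dl (a,a) y - dl (0,0) y)" unfolding S2e
            by (rule sum_single_gen[OF fDia]) (use False inb y \<open>a = b\<close> in \<open>auto simp: Dia_def dl_def\<close>)
          also have "\<dots> = w y" using False y \<open>a = b\<close> by (simp add: dl_def)
          finally show ?thesis using s1 by simp
        qed
      qed
    next
      case False
      hence "y \<notin> Off" unfolding y Off_def by auto
      hence s1: "S1 y = 0" by (simp add: S1e)
      have s2: "S2 y = 0" unfolding S2e using False y N0 by (intro sum.neutral) (auto simp: dl_def Dia_def)
      have "w y = 0" unfolding w_def y using False by (rule Lm_out)
      thus ?thesis using s1 s2 by simp
    qed
  qed
  have dlI: "Mt N (dl x) \<in> I" if "x \<in> Off" for x
  proof -
    obtain a' b' where x: "x = (a',b')" by (cases x)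
    have ab: "a' \<noteq> b'" "a' < N" "b' < N" using that unfolding x Off_def by auto
    show ?thesis
    proof (cases "a' < b'")
      case True
      thus ?thesis unfolding x Mt_dl_lt[OF True ab(3)] using gall[OF ab] unfolding good_def by blast
    next
      case False
      hence "b' < a'" using ab by simp
      thus ?thesis unfolding x Mt_dl_gt[OF \<open>b' < a'\<close> ab(2)] using gall[of b' a'] ab unfolding good_def by auto
    qed
  qed
  have I1: "Mt N S1 \<in> I" unfolding S1_def
  proof (rule Mt_sum_in[OF z fOff], intro ballI)
    fix x assume "x \<in> Off"
    have "Mt N (\<lambda>y. w x * dl x y) = of_real (w x) \<cdot>\<^sub>m Mt N (dl x)" by (rule Mt_scale)
    thus "Mt N (\<lambda>y. w x * dl x y) \<in> I" using Iscale dlI[OF \<open>x \<in> Off\<close>] by simp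
  qed
  have I2: "Mt N S2 \<in> I" unfolding S2_def
  proof (rule Mt_sum_in[OF z fDia], intro ballI)
    fix c assume c: "c \<in> Dia"
    hence c': "0 < c" "c < N" "c \<noteq> 0" unfolding Dia_def by auto
    have "Mt N (dl (c,c) - dl (0,0)) \<in> I" unfolding Mt_dl_diag[OF c'(1,2)]
      by (rule good_diag[OF gall[OF c'(3) c'(2) N0] c'(3) c'(2) N0])
    moreover have "Mt N (\<lambda>y. w (c,c) * (dl (c,c) - dl (0,0)) y) = of_real (w (c,c)) \<cdot>\<^sub>m Mt N (dl (c,c) - dl (0,0))"
      by (rule Mt_scale)
    ultimately show "Mt N (\<lambda>y. w (c,c) * (dl (c,c) - dl (0,0)) y) \<in> I" using Iscale by simp
  qed
  have "A = Mt N w" unfolding w_def by (rule Mt_Lm[OF A, symmetric])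
  also have "\<dots> = Mt N S1 + Mt N S2" unfolding wS by (rule Mt_add)
  finally show "A \<in> I" using I1 I2 Iadd by simp
qed

end

definition sc :: "real \<Rightarrow> (nat \<times> nat \<Rightarrow> real) \<Rightarrow> (nat \<times> nat \<Rightarrow> real)" where
  "sc c f = (\<lambda>x. c * f x)"

interpretation V: vector_space sc
  by unfold_locales (auto simp: sc_def fun_eq_iff algebra_simps plus_fun_def)

lemma sum_apply_fun': "(\<Sum>x\<in>F. f x) y = (\<Sum>x\<in>F. f x y)"
  by (induction F rule: infinite_finite_induct) (auto simp: plus_fun_def zero_fun_def)

lemma indep_dl: "V.independent (dl ` P)"
  unfolding V.independent_explicit_finite_subsets
proof (intro allI impI ballI)
  fix S u v assume S: "S \<subseteq> dl ` P" "finite S" and sum0: "(\<Sum>v\<in>S. sc (u v) v) = 0" and v: "v \<in> S"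
  obtain p where p: "v = dl p" using S v by blast
  have "0 = (\<Sum>v\<in>S. sc (u v) v) p" using sum0 by (simp add: zero_fun_def)
  also have "\<dots> = (\<Sum>w\<in>S. u w * w p)" by (simp add: sum_apply_fun' sc_def)
  also have "\<dots> = u v * v p"
  proof (rule sum.remove[THEN trans])
    show "finite S" "v \<in> S" by fact+
    have "(\<Sum>w\<in>S - {v}. u w * w p) = 0"
    proof (rule sum.neutral, intro ballI)
      fix w assume w: "w \<in> S - {v}"
      then obtain q where q: "w = dl q" using S by blast
      hence "q \<noteq> p" using w p by auto
      thus "u w * w p = 0" unfolding q by (simp add: dl_def)
    qed
    thus "u v * v p + (\<Sum>w\<in>S - {v}. u w * w p) = u v * v p" by simp
  qed
  also have "\<dots> = u v" unfolding p by (simp add: dl_def)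
  finally show "u v = 0" by simp
qed

lemma inj_dl: "inj dl"
proof (rule injI)
  fix p q assume "dl p = dl q"
  hence "dl p p = dl q p" by simp
  thus "p = q" by (simp add: dl_def split: if_splits)
qed

lemma card_off: "card {x \<in> {..<N} \<times> {..<N}. fst x \<noteq> snd x} = N * N - N"
proof -
  have e: "{x \<in> {..<N} \<times> {..<N}. fst x \<noteq> snd x} = ({..<N} \<times> {..<N}) - (\<lambda>c. (c,c)) ` {..<N}" by auto
  have "card ((\<lambda>c. (c,c)) ` {..<N}) = N" by (subst card_image) (auto simp: inj_on_def)
  moreover have "(\<lambda>c. (c,c)) ` {..<N} \<subseteq> {..<N} \<times> {..<N}" by auto
  ultimately show ?thesis unfolding e by (simp add: card_Diff_subset card_cartesian_product)
qed

lemma no_surj: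
  fixes \<phi> :: "complex mat \<Rightarrow> complex mat"
  assumes mN: "m < N" and N2: "2 \<le> N"
    and into: "\<And>X. X \<in> su m \<Longrightarrow> \<phi> X \<in> carrier_mat N N"
    and add: "\<And>X Y. X \<in> su m \<Longrightarrow> Y \<in> su m \<Longrightarrow> \<phi> (X + Y) = \<phi> X + \<phi> Y"
    and scl: "\<And>c X. X \<in> su m \<Longrightarrow> \<phi> (of_real c \<cdot>\<^sub>m X) = of_real c \<cdot>\<^sub>m \<phi> X"
    and onto: "su N \<subseteq> \<phi> ` su m"
  shows False
proof -
  define g where "g v = Lm N (\<phi> (Mt m v))" for v
  have gadd: "g (v + w) = g v + g w" for v w
    unfolding g_def Mt_add add[OF Mt_su Mt_su] by (rule Lm_add[OF into[OF Mt_su] into[OF Mt_su]])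
  have gsc: "g (sc c v) = sc c (g v)" for c v
    unfolding g_def sc_def Mt_scale scl[OF Mt_su] by (rule Lm_scale[OF into[OF Mt_su]])
  have g0: "g 0 = 0"
  proof -
    have "g 0 = g (0 + 0)" by simp
    also have "\<dots> = g 0 + g 0" by (rule gadd)
    finally show ?thesis by simp
  qed
  have gsum: "g (\<Sum>x\<in>F. f x) = (\<Sum>x\<in>F. g (f x))" if "finite F" for F f
    using that
  proof (induction F rule: finite_induct)
    case empty show ?case by (simp only: sum.empty g0)
  next
    case (insert x F) show ?case by (simp only: sum.insert[OF insert(1,2)] gadd insert(3))
  qed
  define Bm where "Bm = {..<m} \<times> {..<m}"
  define OffN where "OffN = {x \<in> {..<N} \<times> {..<N}. fst x \<noteq> snd x}"
  have fBm: "finite Bm" unfolding Bm_def by simp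
  have rng: "g v \<in> V.span (g ` dl ` Bm)" for v
  proof -
    define vb where "vb = (\<lambda>x. if x \<in> Bm then v x else 0)"
    have "Mt m v = Mt m vb"
    proof (rule eq_matI)
      fix i j assume "i < dim_row (Mt m vb)" "j < dim_col (Mt m vb)"
      hence ij: "i < m" "j < m" by auto
      have "tr m v = tr m vb" unfolding tr_def vb_def Bm_def by (rule sum.cong) auto
      thus "Mt m v $$ (i, j) = Mt m vb $$ (i, j)" using ij by (simp add: Mt_entry vb_def Bm_def)
    qed auto
    hence "g v = g vb" unfolding g_def by simp
    also have "vb = (\<Sum>p\<in>Bm. sc (v p) (dl p))"
    proof (rule ext)
      fix y
      have "(\<Sum>p\<in>Bm. sc (v p) (dl p)) y = (\<Sum>p\<in>Bm. if p = y then v p else 0)"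
        unfolding sum_apply_fun' by (rule sum.cong) (auto simp: sc_def dl_def)
      also have "\<dots> = vb y" using fBm by (simp add: sum.delta vb_def)
      finally show "vb y = (\<Sum>p\<in>Bm. sc (v p) (dl p)) y" by simp
    qed
    also have "g (\<Sum>p\<in>Bm. sc (v p) (dl p)) = (\<Sum>p\<in>Bm. sc (v p) (g (dl p)))"
      by (simp add: gsum[OF fBm] gsc)
    also have "\<dots> \<in> V.span (g ` dl ` Bm)"
      by (intro V.span_sum V.span_scale V.span_base) auto
    finally show ?thesis .
  qed
  have TinR: "dl ` OffN \<subseteq> V.span (g ` dl ` Bm)"
  proof
    fix t assume "t \<in> dl ` OffN"
    then obtain p where p: "p \<in> OffN" "t = dl p" by blast
    obtain a b where ab: "p = (a,b)" by (cases p)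
    have ab': "a < N" "b < N" "a \<noteq> b" using p(1) unfolding OffN_def ab by auto
    have supp: "\<And>x y. \<not> (x < N \<and> y < N) \<Longrightarrow> dl p (x,y) = 0" using ab' unfolding ab dl_def by auto
    have trp: "tr N (dl p) = 0" unfolding tr_def dl_def ab using ab' by (intro sum.neutral) auto
    have "Mt N (dl p) \<in> \<phi> ` su m" by (rule subsetD[OF onto Mt_su])
    then obtain X where X: "X \<in> su m" "\<phi> X = Mt N (dl p)" by (metis imageE)
    have "t = Lm N (Mt N (dl p))" unfolding p(2) by (rule Lm_Mt[OF supp trp, symmetric])
    also have "\<dots> = g (Lm m X)" unfolding g_def Mt_Lm[OF X(1)] X(2) ..
    finally have tg: "t = g (Lm m X)" .
    show "t \<in> V.span (g ` dl ` Bm)" unfolding tg by (rule rng)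
  qed
  have "finite (dl ` OffN) \<and> card (dl ` OffN) \<le> card (g ` dl ` Bm)"
    by (rule V.independent_span_bound[OF _ indep_dl TinR]) (use fBm in simp)
  hence c1: "card (dl ` OffN) \<le> card (g ` dl ` Bm)" by blast
  have "card (g ` dl ` Bm) \<le> card (dl ` Bm)" by (rule card_image_le) (use fBm in simp)
  also have "\<dots> \<le> card Bm" by (rule card_image_le[OF fBm])
  also have "\<dots> = m * m" unfolding Bm_def by (simp add: card_cartesian_product)
  finally have c2: "card (dl ` OffN) \<le> m * m" using c1 by linarith
  have "card (dl ` OffN) = card OffN" by (rule card_image) (use inj_dl in \<open>auto simp: inj_on_def inj_def\<close>)
  also have "\<dots> = N * N - N" unfolding OffN_def by (rule card_off)
  finally have c3: "N * N - N \<le> m * m" using c2 by linarith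
  obtain k where k: "N = Suc k" using mN by (cases N) auto
  have "m \<le> k" using mN k by simp
  hence "m * m \<le> k * k" by (simp add: mult_le_mono)
  moreover have "N * N - N = k * k + k" unfolding k by (simp add: algebra_simps)
  ultimately have "k * k + k \<le> k * k" using c3 by linarith
  hence "k = 0" by simp
  thus False using N2 k by simp
qed


definition full :: "(nat \<Rightarrow> nat) \<Rightarrow> nat set \<Rightarrow> (nat \<Rightarrow> complex mat) set" where
  "full n S = {A. (\<forall>j\<in>S. A j \<in> su (n j)) \<and> (\<forall>j. j \<notin> S \<longrightarrow> A j = 0\<^sub>m 0 0)}"

definition Ej :: "(nat \<Rightarrow> nat) \<Rightarrow> nat set \<Rightarrow> nat \<Rightarrow> complex mat \<Rightarrow> (nat \<Rightarrow> complex mat)" where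
  "Ej n S j X = (\<lambda>k. if k = j then X else if k \<in> S then 0\<^sub>m (n k) (n k) else 0\<^sub>m 0 0)"

definition Z0 :: "(nat \<Rightarrow> nat) \<Rightarrow> nat set \<Rightarrow> (nat \<Rightarrow> complex mat)" where
  "Z0 n S = (\<lambda>k. if k \<in> S then 0\<^sub>m (n k) (n k) else 0\<^sub>m 0 0)"

definition proj :: "nat set \<Rightarrow> (nat \<Rightarrow> complex mat) \<Rightarrow> (nat \<Rightarrow> complex mat)" where
  "proj T A = (\<lambda>k. if k \<in> T then A k else 0\<^sub>m 0 0)"

definition wsc :: "(nat \<Rightarrow> nat) \<Rightarrow> nat set \<Rightarrow> (nat \<Rightarrow> complex mat) set \<Rightarrow> bool" where
  "wsc n S R \<longleftrightarrow> (\<forall>j\<in>S. \<forall>Z\<in>su (n j). \<exists>A\<in>R. A j = Z)"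

lemma su_carrier: "A \<in> su n \<Longrightarrow> A \<in> carrier_mat n n" by (simp add: su_def)

lemma full_carrier: "A \<in> full n S \<Longrightarrow> j \<in> S \<Longrightarrow> A j \<in> carrier_mat (n j) (n j)"
  unfolding full_def using su_carrier by blast

lemma full_out: "A \<in> full n S \<Longrightarrow> j \<notin> S \<Longrightarrow> A j = 0\<^sub>m 0 0"
  unfolding full_def by blast

lemma full_su: "A \<in> full n S \<Longrightarrow> j \<in> S \<Longrightarrow> A j \<in> su (n j)"
  unfolding full_def by blast

lemma zsm: "A \<in> carrier_mat a b \<Longrightarrow> (0::complex) \<cdot>\<^sub>m A = 0\<^sub>m a b"
  by (intro eq_matI) auto

lemma br_zero_r: "(A :: complex mat) \<in> carrier_mat m m \<Longrightarrow> A * 0\<^sub>m m m - 0\<^sub>m m m * A = 0\<^sub>m m m"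
  by (intro eq_matI) auto

lemma br_zero_l: "(A :: complex mat) \<in> carrier_mat m m \<Longrightarrow> 0\<^sub>m m m * A - A * 0\<^sub>m m m = 0\<^sub>m m m"
  by (intro eq_matI) auto

lemma add_neg_self: "(A :: complex mat) \<in> carrier_mat a b \<Longrightarrow> A + (-1) \<cdot>\<^sub>m A = 0\<^sub>m a b"
  by (intro eq_matI) auto

lemma add_neg_eq: assumes "(A :: complex mat) \<in> carrier_mat a b" "B \<in> carrier_mat a b" "A + (-1) \<cdot>\<^sub>m B = 0\<^sub>m a b"
  shows "A = B"
proof (rule eq_matI)
  fix i j assume "i < dim_row B" "j < dim_col B"
  hence ij: "i < a" "j < b" using assms by auto
  have "(A + (-1) \<cdot>\<^sub>m B) $$ (i,j) = 0" using assms(3) ij by simp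
  moreover have "(A + (-1) \<cdot>\<^sub>m B) $$ (i,j) = A $$ (i,j) - B $$ (i,j)" using assms(1,2) ij by simp
  ultimately show "A $$ (i,j) = B $$ (i,j)" by simp
qed (use assms in auto)

lemma zero00: "0\<^sub>m 0 0 + (0\<^sub>m 0 0 :: complex mat) = 0\<^sub>m 0 0" "c \<cdot>\<^sub>m (0\<^sub>m 0 0 :: complex mat) = 0\<^sub>m 0 0"
  "0\<^sub>m 0 0 * 0\<^sub>m 0 0 - 0\<^sub>m 0 0 * (0\<^sub>m 0 0 :: complex mat) = 0\<^sub>m 0 0"
  by (auto intro!: eq_matI)

lemma lie_add: "real_lie_subalgebra R \<Longrightarrow> A \<in> R \<Longrightarrow> B \<in> R \<Longrightarrow> bd_add A B \<in> R"
  unfolding real_lie_subalgebra_def by blast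
lemma lie_scale: "real_lie_subalgebra R \<Longrightarrow> A \<in> R \<Longrightarrow> bd_scale c A \<in> R"
  unfolding real_lie_subalgebra_def by blast
lemma lie_br: "real_lie_subalgebra R \<Longrightarrow> A \<in> R \<Longrightarrow> B \<in> R \<Longrightarrow> bd_bracket A B \<in> R"
  unfolding real_lie_subalgebra_def by blast
lemma lie_ne: "real_lie_subalgebra R \<Longrightarrow> \<exists>A. A \<in> R"
  unfolding real_lie_subalgebra_def by blast

context
  fixes n :: "nat \<Rightarrow> nat" and S :: "nat set" and R :: "(nat \<Rightarrow> complex mat) set"
  assumes sub: "R \<subseteq> full n S" and lie: "real_lie_subalgebra R"
begin

lemma Z0_in: "Z0 n S \<in> R"
proof -
  obtain A where A: "A \<in> R" using lie_ne[OF lie] by blast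
  have Af: "A \<in> full n S" using A sub by blast
  have "bd_scale 0 A = Z0 n S"
  proof (rule ext)
    fix k show "bd_scale 0 A k = Z0 n S k"
      using full_carrier[OF Af, of k] full_out[OF Af, of k] zsm
      by (cases "k \<in> S") (auto simp: bd_scale_def Z0_def)
  qed
  thus ?thesis using lie_scale[OF lie A, of 0] by simp
qed

lemma from_E:
  assumes fin: "finite S" and E: "\<And>j X. j \<in> S \<Longrightarrow> X \<in> su (n j) \<Longrightarrow> Ej n S j X \<in> R"
  shows "R = full n S"
proof
  show "full n S \<subseteq> R"
  proof
    fix B assume B: "B \<in> full n S"
    define restr where "restr T = (\<lambda>k. if k \<in> T then B k else Z0 n S k)" for T
    have "restr T \<in> R" if "T \<subseteq> S" for T
    proof -
      have "finite T" using fin that finite_subset by blast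
      thus ?thesis using that
      proof (induction T rule: finite_induct)
        case empty
        have "restr {} = Z0 n S" unfolding restr_def by simp
        thus ?case using Z0_in by simp
      next
        case (insert t T)
        have tS: "t \<in> S" using insert by blast
        have eqr: "bd_add (restr T) (Ej n S t (B t)) = restr (insert t T)"
        proof (rule ext)
          fix k
          show "bd_add (restr T) (Ej n S t (B t)) k = restr (insert t T) k"
            using full_carrier[OF B, of k] full_carrier[OF B tS] full_out[OF B, of k] insert(2,4) tS
            by (cases "k = t"; cases "k \<in> T"; cases "k \<in> S")
               (auto simp: bd_add_def restr_def Ej_def Z0_def zero00)
        qed
        have "Ej n S t (B t) \<in> R" using E[OF tS full_su[OF B tS]] .
        moreover have "restr T \<in> R" using insert by blast
        ultimately show ?case unfolding eqr[symmetric] using lie_add[OF lie] by blast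
      qed
    qed
    moreover have "restr S = B"
    proof (rule ext)
      fix k show "restr S k = B k" using full_out[OF B, of k] by (simp add: restr_def Z0_def)
    qed
    ultimately show "B \<in> R" by (metis order_refl)
  qed
qed (rule sub)

lemma Ej_add: "j \<in> S \<Longrightarrow> bd_add (Ej n S j X) (Ej n S j Y) = Ej n S j (X + Y)"
  by (rule ext) (auto simp: bd_add_def Ej_def zero00)

lemma Ej_scale: "bd_scale c (Ej n S j X) = Ej n S j (of_real c \<cdot>\<^sub>m X)"
  by (rule ext) (auto simp: bd_scale_def Ej_def zero00)

lemma Ej_in_su: "Ej n S j X \<in> R \<Longrightarrow> j \<in> S \<Longrightarrow> X \<in> su (n j)"
  using sub full_su[of "Ej n S j X" n S j] by (auto simp: Ej_def)

lemma Ej_br: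
  assumes "Ej n S j X \<in> R" "j \<in> S" "C \<in> R"
  shows "Ej n S j (X * C j - C j * X) \<in> R"
proof -
  have Cf: "C \<in> full n S" using assms(3) sub by blast
  have "bd_bracket (Ej n S j X) C = Ej n S j (X * C j - C j * X)"
  proof (rule ext)
    fix k show "bd_bracket (Ej n S j X) C k = Ej n S j (X * C j - C j * X) k"
      using full_carrier[OF Cf, of k] full_out[OF Cf, of k] br_zero_l
      by (cases "k = j"; cases "k \<in> S") (auto simp: bd_bracket_def Ej_def zero00)
  qed
  thus ?thesis using lie_br[OF lie assms(1,3)] by simp
qed

lemma ideal_lideal:
  assumes j: "j \<in> S" and n2: "2 \<le> n j" and w: "wsc n S R"
  shows "lideal {X. Ej n S j X \<in> R} (n j)"
proof
  show "2 \<le> n j" by fact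
next
  fix X Y assume "X \<in> {X. Ej n S j X \<in> R}" "Y \<in> {X. Ej n S j X \<in> R}"
  thus "X + Y \<in> {X. Ej n S j X \<in> R}" using lie_add[OF lie] Ej_add[OF j] by force
next
  fix c X assume "X \<in> {X. Ej n S j X \<in> R}"
  thus "of_real c \<cdot>\<^sub>m X \<in> {X. Ej n S j X \<in> R}" using lie_scale[OF lie] Ej_scale by force
next
  fix X Y assume X: "X \<in> {X. Ej n S j X \<in> R}" and Y: "Y \<in> su (n j)"
  obtain C where C: "C \<in> R" "C j = Y" using w j Y unfolding wsc_def by blast
  show "X * Y - Y * X \<in> {X. Ej n S j X \<in> R}" using Ej_br[of j X C] X C j by simp
next
  show "{X. Ej n S j X \<in> R} \<subseteq> su (n j)" using Ej_in_su j by blast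
qed

lemma small:
  assumes j: "j \<in> S" and n1: "n j \<le> 1" and X: "X \<in> su (n j)"
  shows "Ej n S j X \<in> R"
proof -
  have Xc: "X \<in> carrier_mat (n j) (n j)" using su_carrier[OF X] .
  have "X = 0\<^sub>m (n j) (n j)"
  proof (rule eq_matI)
    fix a b assume "a < dim_row (0\<^sub>m (n j) (n j) :: complex mat)" "b < dim_col (0\<^sub>m (n j) (n j) :: complex mat)"
    hence ab: "a = 0" "b = 0" "0 < n j" using n1 by auto
    have "(\<Sum>i<n j. X $$ (i,i)) = X $$ (0,0)" using n1 ab by (cases "n j") auto
    thus "X $$ (a, b) = 0\<^sub>m (n j) (n j) $$ (a, b)" using su_trace[OF X] ab by simp
  qed (use Xc in auto)
  hence "Ej n S j X = Z0 n S" using j by (auto simp: Ej_def Z0_def)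
  thus ?thesis using Z0_in by simp
qed

end


lemma zero_su: "0\<^sub>m m m \<in> su m"
proof -
  have "(\<Sum>i<m. (0\<^sub>m m m :: complex mat) $$ (i,i)) = 0" by (intro sum.neutral) auto
  moreover have "\<forall>i<m. \<forall>j<m. (0\<^sub>m m m :: complex mat) $$ (i,j) = - cnj ((0\<^sub>m m m :: complex mat) $$ (j,i))" by simp
  ultimately show ?thesis unfolding su_iff by auto
qed

lemma proj_full: "A \<in> full n S \<Longrightarrow> T \<subseteq> S \<Longrightarrow> proj T A \<in> full n T"
  unfolding full_def proj_def by auto

lemma proj_lie:
  assumes lie: "real_lie_subalgebra R"
  shows "real_lie_subalgebra (proj T ` R)"
  unfolding real_lie_subalgebra_def
proof (intro conjI ballI allI)
  show "proj T ` R \<noteq> {}" using lie_ne[OF lie] by blast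
next
  fix A B assume "A \<in> proj T ` R" "B \<in> proj T ` R"
  then obtain A' B' where AB: "A' \<in> R" "B' \<in> R" "A = proj T A'" "B = proj T B'" by blast
  have "bd_add A B = proj T (bd_add A' B')" unfolding AB by (rule ext) (simp add: bd_add_def proj_def zero00)
  thus "bd_add A B \<in> proj T ` R" using lie_add[OF lie AB(1,2)] by blast
  have "bd_bracket A B = proj T (bd_bracket A' B')" unfolding AB by (rule ext) (simp add: bd_bracket_def proj_def zero00)
  thus "bd_bracket A B \<in> proj T ` R" using lie_br[OF lie AB(1,2)] by blast
next
  fix c A assume "A \<in> proj T ` R"
  then obtain A' where A: "A' \<in> R" "A = proj T A'" by blast
  have "bd_scale c A = proj T (bd_scale c A')" unfolding A by (rule ext) (simp add: bd_scale_def proj_def zero00)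
  thus "bd_scale c A \<in> proj T ` R" using lie_scale[OF lie A(1)] by blast
qed

lemma proj_wsc: "wsc n S R \<Longrightarrow> T \<subseteq> S \<Longrightarrow> wsc n T (proj T ` R)"
  unfolding wsc_def proj_def by force

context
  fixes n :: "nat \<Rightarrow> nat" and S :: "nat set" and R :: "(nat \<Rightarrow> complex mat) set"
  assumes sub: "R \<subseteq> full n S" and lie: "real_lie_subalgebra R" and w: "wsc n S R"
begin

lemma two_big:
  assumes S: "S = {a,b}" "a \<noteq> b" and lt: "n b < n a" and n2: "2 \<le> n a" and X: "X \<in> su (n a)"
  shows "Ej n S a X \<in> R"
proof -
  have aS: "a \<in> S" and bS: "b \<in> S" using S by auto
  have "\<exists>X0. X0 \<noteq> 0\<^sub>m (n a) (n a) \<and> Ej n S a X0 \<in> R"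
  proof (rule ccontr)
    assume H: "\<not> ?thesis"
    have zI: "Y = 0\<^sub>m (n a) (n a)" if "Ej n S a Y \<in> R" for Y using H that by blast
    have uniq: "A a = A' a" if A: "A \<in> R" "A' \<in> R" "A b = A' b" for A A'
    proof -
      have Af: "A \<in> full n S" "A' \<in> full n S" using A sub by auto
      have "bd_add A (bd_scale (-1) A') = Ej n S a (A a + (-1) \<cdot>\<^sub>m A' a)"
      proof (rule ext)
        fix k show "bd_add A (bd_scale (-1) A') k = Ej n S a (A a + (-1) \<cdot>\<^sub>m A' a) k"
        proof (cases "k = a")
          case False
          show ?thesis
          proof (cases "k = b")
            case True
            thus ?thesis using False A(3) add_neg_self[OF full_carrier[OF Af(2) bS]] bS
              by (simp add: bd_add_def bd_scale_def Ej_def)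
          next
            case False2: False
            hence "k \<notin> S" using False S by auto
            thus ?thesis using False False2 full_out[OF Af(1)] full_out[OF Af(2)]
              by (simp add: bd_add_def bd_scale_def Ej_def zero00)
          qed
        qed (simp add: bd_add_def bd_scale_def Ej_def)
      qed
      moreover have "bd_add A (bd_scale (-1) A') \<in> R" using lie_add[OF lie A(1) lie_scale[OF lie A(2)]] .
      ultimately have "A a + (-1) \<cdot>\<^sub>m A' a = 0\<^sub>m (n a) (n a)" using zI by simp
      thus ?thesis using add_neg_eq full_carrier[OF Af(1) aS] full_carrier[OF Af(2) aS] by blast
    qed
    define \<phi> where "\<phi> Y = (SOME Z. \<exists>A\<in>R. A b = Y \<and> A a = Z)" for Y
    have phi: "\<phi> (A b) = A a" if A: "A \<in> R" for A
    proof -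
      have "\<exists>Z. \<exists>A'\<in>R. A' b = A b \<and> A' a = Z" using A by blast
      hence "\<exists>A'\<in>R. A' b = A b \<and> A' a = \<phi> (A b)" unfolding \<phi>_def by (rule someI_ex)
      then obtain A' where "A' \<in> R" "A' b = A b" "A' a = \<phi> (A b)" by blast
      thus ?thesis using uniq[OF A, of A'] by simp
    qed
    have lift: "\<exists>A\<in>R. A b = Y" if "Y \<in> su (n b)" for Y using w bS that unfolding wsc_def by blast
    show False
    proof (rule no_surj[of "n b" "n a" \<phi>])
      show "n b < n a" "2 \<le> n a" by fact+
    next
      fix Y assume "Y \<in> su (n b)"
      then obtain A where A: "A \<in> R" "A b = Y" using lift by blast
      show "\<phi> Y \<in> carrier_mat (n a) (n a)" using phi[OF A(1)] A sub full_carrier[of A n S a] aS by auto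
    next
      fix Y1 Y2 assume "Y1 \<in> su (n b)" "Y2 \<in> su (n b)"
      then obtain A1 A2 where A: "A1 \<in> R" "A1 b = Y1" "A2 \<in> R" "A2 b = Y2" using lift by metis
      have "bd_add A1 A2 \<in> R" by (rule lie_add[OF lie A(1,3)])
      from phi[OF this] show "\<phi> (Y1 + Y2) = \<phi> Y1 + \<phi> Y2"
        using phi[OF A(1)] phi[OF A(3)] A by (simp add: bd_add_def)
    next
      fix c Y assume "Y \<in> su (n b)"
      then obtain A where A: "A \<in> R" "A b = Y" using lift by blast
      have "bd_scale c A \<in> R" by (rule lie_scale[OF lie A(1)])
      from phi[OF this] show "\<phi> (of_real c \<cdot>\<^sub>m Y) = of_real c \<cdot>\<^sub>m \<phi> Y"
        using phi[OF A(1)] A by (simp add: bd_scale_def)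
    next
      show "su (n a) \<subseteq> \<phi> ` su (n b)"
      proof
        fix Z assume "Z \<in> su (n a)"
        then obtain A where A: "A \<in> R" "A a = Z" using w aS unfolding wsc_def by blast
        have "A b \<in> su (n b)" using A sub full_su bS by blast
        moreover have "\<phi> (A b) = Z" using phi[OF A(1)] A(2) by simp
        ultimately show "Z \<in> \<phi> ` su (n b)" by blast
      qed
    qed
  qed
  then obtain X0 where X0: "X0 \<noteq> 0\<^sub>m (n a) (n a)" "Ej n S a X0 \<in> R" by blast
  interpret L: lideal "{X. Ej n S a X \<in> R}" "n a" by (rule ideal_lideal[OF sub lie aS n2 w])
  have "su (n a) \<subseteq> {X. Ej n S a X \<in> R}" by (rule L.su_sub) (use X0 in auto)
  thus ?thesis using X by blast
qed

lemma two_small: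
  assumes S: "S = {a,b}" "a \<noteq> b" and lt: "n b < n a" and n2: "2 \<le> n a" and Y: "Y \<in> su (n b)"
  shows "Ej n S b Y \<in> R"
proof -
  have aS: "a \<in> S" and bS: "b \<in> S" using S by auto
  obtain A where A: "A \<in> R" "A b = Y" using w bS Y unfolding wsc_def by blast
  have Af: "A \<in> full n S" using A sub by blast
  have E: "Ej n S a (A a) \<in> R" by (rule two_big[OF S lt n2 full_su[OF Af aS]])
  have "bd_add A (bd_scale (-1) (Ej n S a (A a))) = Ej n S b Y"
  proof (rule ext)
    fix k show "bd_add A (bd_scale (-1) (Ej n S a (A a))) k = Ej n S b Y k"
    proof (cases "k = a")
      case True
      thus ?thesis using add_neg_self[OF full_carrier[OF Af aS]] S aS by (simp add: bd_add_def bd_scale_def Ej_def)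
    next
      case False
      show ?thesis
      proof (cases "k = b")
        case True
        thus ?thesis using False A(2) full_carrier[OF Af bS] bS by (simp add: bd_add_def bd_scale_def Ej_def)
      next
        case False2: False
        hence "k \<notin> S" using False S by auto
        thus ?thesis using False False2 full_out[OF Af] by (simp add: bd_add_def bd_scale_def Ej_def zero00)
      qed
    qed
  qed
  moreover have "bd_add A (bd_scale (-1) (Ej n S a (A a))) \<in> R" using lie_add[OF lie A(1) lie_scale[OF lie E]] .
  ultimately show ?thesis by simp
qed

lemma three:
  assumes jS: "j \<in> S" and l1: "l1 \<in> S" and l2: "l2 \<in> S" and d: "j \<noteq> l1" "j \<noteq> l2" "l1 \<noteq> l2"
    and n2: "2 \<le> n j"
    and H1: "full n (S - {l1}) \<subseteq> proj (S - {l1}) ` R"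
    and H2: "full n (S - {l2}) \<subseteq> proj (S - {l2}) ` R"
  shows "\<exists>X0. X0 \<noteq> 0\<^sub>m (n j) (n j) \<and> Ej n S j X0 \<in> R"
proof -
  define X where "X = Pm (n j) 0 1 1"
  define Z where "Z = Pm (n j) 1 0 \<i>"
  have Xs: "X \<in> su (n j)" unfolding X_def by (rule Pm_su) (use n2 in auto)
  have Zs: "Z \<in> su (n j)" unfolding Z_def by (rule Pm_su) (use n2 in auto)
  have Ef: "Ej n (S - {l}) j Y \<in> full n (S - {l})" if "Y \<in> su (n j)" "l \<noteq> j" for Y l
    unfolding full_def mem_Collect_eq
  proof (intro conjI ballI allI impI)
    fix k assume "k \<in> S - {l}"
    thus "Ej n (S - {l}) j Y k \<in> su (n k)" using that zero_su by (cases "k = j") (simp_all add: Ej_def)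
  next
    fix k assume k: "k \<notin> S - {l}"
    hence kj: "k \<noteq> j" using jS that(2) by blast
    show "Ej n (S - {l}) j Y k = 0\<^sub>m 0 0" unfolding Ej_def by (simp only: if_not_P[OF kj] if_not_P[OF k])
  qed
  have "Ej n (S - {l1}) j X \<in> proj (S - {l1}) ` R" by (rule subsetD[OF H1 Ef[OF Xs d(1)[symmetric]]])
  then obtain A where A: "A \<in> R" "proj (S - {l1}) A = Ej n (S - {l1}) j X" by (metis imageE)
  have "Ej n (S - {l2}) j Z \<in> proj (S - {l2}) ` R" by (rule subsetD[OF H2 Ef[OF Zs d(2)[symmetric]]])
  then obtain C where C: "C \<in> R" "proj (S - {l2}) C = Ej n (S - {l2}) j Z" by (metis imageE)
  have Af: "A \<in> full n S" and Cf: "C \<in> full n S" using A C sub by auto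
  have Aj: "A j = X" using fun_cong[OF A(2), of j] jS d by (simp add: proj_def Ej_def)
  have Cj: "C j = Z" using fun_cong[OF C(2), of j] jS d by (simp add: proj_def Ej_def)
  have Ak: "A k = 0\<^sub>m (n k) (n k)" if "k \<in> S" "k \<noteq> j" "k \<noteq> l1" for k
    using fun_cong[OF A(2), of k] that by (simp add: proj_def Ej_def)
  have Ck: "C k = 0\<^sub>m (n k) (n k)" if "k \<in> S" "k \<noteq> j" "k \<noteq> l2" for k
    using fun_cong[OF C(2), of k] that by (simp add: proj_def Ej_def)
  have "bd_bracket A C = Ej n S j (X * Z - Z * X)"
  proof (rule ext)
    fix k show "bd_bracket A C k = Ej n S j (X * Z - Z * X) k"
    proof (cases "k \<in> S")
      case False
      thus ?thesis using full_out[OF Af False] full_out[OF Cf False] jS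
        by (auto simp: bd_bracket_def Ej_def zero00)
    next
      case True
      show ?thesis
      proof (cases "k = j")
        case True thus ?thesis using Aj Cj by (simp add: bd_bracket_def Ej_def)
      next
        case kj: False
        show ?thesis
        proof (cases "k = l1")
          case True
          hence "C k = 0\<^sub>m (n k) (n k)" using Ck[of k] l1 d kj by auto
          thus ?thesis using br_zero_r[OF full_carrier[OF Af \<open>k \<in> S\<close>]] kj \<open>k \<in> S\<close>
            by (simp add: bd_bracket_def Ej_def)
        next
          case kl1: False
          hence Az: "A k = 0\<^sub>m (n k) (n k)" using Ak[of k] \<open>k \<in> S\<close> kj by auto
          thus ?thesis using br_zero_l[OF full_carrier[OF Cf \<open>k \<in> S\<close>]] kj \<open>k \<in> S\<close>
            by (simp add: bd_bracket_def Ej_def)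
        qed
      qed
    qed
  qed
  moreover have "bd_bracket A C \<in> R" by (rule lie_br[OF lie A(1) C(1)])
  ultimately have inR: "Ej n S j (X * Z - Z * X) \<in> R" by simp
  have "X * Z - Z * X = Dg (n j) (\<lambda>i. if i = 0 then 1 * \<i> - cnj (1 * \<i>) else if i = 1 then cnj (1 * \<i>) - 1 * \<i> else 0)"
    unfolding X_def Z_def by (rule Pm_bracket2) (use n2 in auto)
  hence "(X * Z - Z * X) $$ (0,0) = 2 * \<i>" using n2 by (simp add: Dg_entry complex_eq_iff)
  hence "X * Z - Z * X \<noteq> 0\<^sub>m (n j) (n j)" using n2 by auto
  thus ?thesis using inR by blast
qed

end


lemma main_gen:
  assumes "finite S" "inj_on n S" "R \<subseteq> full n S" "real_lie_subalgebra R" "wsc n S R"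
  shows "R = full n S"
  using assms
proof (induction "card S" arbitrary: S R rule: less_induct)
  case less
  have fin: "finite S" and inj: "inj_on n S" and sub: "R \<subseteq> full n S"
    and lie: "real_lie_subalgebra R" and w: "wsc n S R" using less.prems by auto
  have IH: "full n T \<subseteq> proj T ` R" if T: "T \<subseteq> S" "card T < card S" for T
  proof -
    have "proj T ` R \<subseteq> full n T"
    proof
      fix B assume "B \<in> proj T ` R"
      then obtain A where A: "A \<in> R" "B = proj T A" by (metis imageE)
      show "B \<in> full n T" unfolding A(2) by (rule proj_full[OF _ T(1)]) (use A(1) sub in blast)
    qed
    have "proj T ` R = full n T"
      by (rule less.hyps[OF T(2) finite_subset[OF T(1) fin] inj_on_subset[OF inj T(1)]
            \<open>proj T ` R \<subseteq> full n T\<close> proj_lie[OF lie] proj_wsc[OF w T(1)]])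
    thus ?thesis by simp
  qed
  have E: "Ej n S j X \<in> R" if j: "j \<in> S" and X: "X \<in> su (n j)" for j X
  proof (cases "n j \<le> 1")
    case True thus ?thesis by (rule small[OF sub lie j _ X])
  next
    case False hence n2: "2 \<le> n j" by simp
    consider (c3) "3 \<le> card S" | (c2) "card S = 2" | (c1) "card S \<le> 1" by linarith
    thus ?thesis
    proof cases
      case c3
      have "card (S - {j}) = card S - 1" using j fin by (simp add: card_Diff_singleton)
      hence "2 \<le> card (S - {j})" using c3 by simp
      then obtain T where T: "T \<subseteq> S - {j}" "card T = 2" using obtain_subset_with_card_n by metis
      then obtain l1 l2 where l: "T = {l1, l2}" "l1 \<noteq> l2" by (metis card_2_iff)
      have l1S: "l1 \<in> S" "l1 \<noteq> j" and l2S: "l2 \<in> S" "l2 \<noteq> j" using T(1) l(1) by auto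
      have H1: "full n (S - {l1}) \<subseteq> proj (S - {l1}) ` R"
        by (rule IH[OF Diff_subset card_Diff1_less[OF fin l1S(1)]])
      have H2: "full n (S - {l2}) \<subseteq> proj (S - {l2}) ` R"
        by (rule IH[OF Diff_subset card_Diff1_less[OF fin l2S(1)]])
      obtain X0 where X0: "X0 \<noteq> 0\<^sub>m (n j) (n j)" "Ej n S j X0 \<in> R"
        using three[OF sub lie w j l1S(1) l2S(1) l1S(2)[symmetric] l2S(2)[symmetric] l(2) n2 H1 H2] by blast
      interpret L: lideal "{X. Ej n S j X \<in> R}" "n j" by (rule ideal_lideal[OF sub lie j n2 w])
      have "su (n j) \<subseteq> {X. Ej n S j X \<in> R}" by (rule L.su_sub) (use X0 in auto)
      thus ?thesis using X by blast
    next
      case c2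
      then obtain a b where ab: "S = {a,b}" "a \<noteq> b" by (metis card_2_iff)
      have nab: "n a \<noteq> n b" using inj ab unfolding inj_on_def by blast
      show ?thesis
      proof (cases "n b < n a")
        case True
        show ?thesis
        proof (cases "j = a")
          case True
          have "2 \<le> n a" "X \<in> su (n a)" using n2 X True by auto
          thus ?thesis using two_big[OF sub lie w ab \<open>n b < n a\<close>] True by blast
        next
          case False hence jb: "j = b" using j ab by auto
          have "2 \<le> n a" "X \<in> su (n b)" using n2 X jb \<open>n b < n a\<close> by auto
          thus ?thesis using two_small[OF sub lie w ab \<open>n b < n a\<close>] jb by blast
        qed
      next
        case False
        hence lt: "n a < n b" using nab by simp
        have ab': "S = {b,a}" "b \<noteq> a" using ab by auto
        show ?thesis
        proof (cases "j = b")
          case True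
          have "2 \<le> n b" "X \<in> su (n b)" using n2 X True by auto
          thus ?thesis using two_big[OF sub lie w ab' lt] True by blast
        next
          case False hence ja: "j = a" using j ab by auto
          have "2 \<le> n b" "X \<in> su (n a)" using n2 X ja lt by auto
          thus ?thesis using two_small[OF sub lie w ab' lt] ja by blast
        qed
      qed
    next
      case c1
      have "card S \<noteq> 0" using j fin by auto
      hence "card S = 1" using c1 by simp
      then obtain x where "S = {x}" by (metis card_1_singletonE)
      hence Sj: "S = {j}" using j by simp
      obtain A where A: "A \<in> R" "A j = X" using w j X unfolding wsc_def by blast
      have Af: "A \<in> full n S" using A sub by blast
      have "A = Ej n S j X"
      proof (rule ext)
        fix k show "A k = Ej n S j X k"
        proof (cases "k = j")
          case True thus ?thesis using A by (simp add: Ej_def)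
        next
          case False
          hence "k \<notin> S" using Sj by simp
          thus ?thesis using False full_out[OF Af] by (simp add: Ej_def)
        qed
      qed
      thus ?thesis using A by simp
    qed
  qed
  show ?case by (rule from_E[OF sub lie fin E])
qed

theorem lemma4p3:
  fixes n :: "nat \<Rightarrow> nat" and r :: nat and R :: "(nat \<Rightarrow> complex mat) set"
  assumes pos: "\<forall>j<r. n j > 0"
    and distinct: "\<forall>j<r. \<forall>l<r. j \<noteq> l \<longrightarrow> n j \<noteq> n l"
    and sub: "R \<subseteq> block_su n r"
    and lie: "real_lie_subalgebra R"
    and wsc: "\<forall>j<r. \<forall>Z\<in>su (n j). \<exists>A\<in>R. A j = Z"
  shows "R = block_su n r"
proof -
  have bf: "block_su n r = full n {..<r}" unfolding block_su_def full_def by auto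
  have inj: "inj_on n {..<r}" unfolding inj_on_def using distinct by blast
  have w: "wsc n {..<r} R" unfolding wsc_def using wsc by simp
  show ?thesis unfolding bf by (rule main_gen[OF _ inj sub[unfolded bf] lie w]) simp
qed


end
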